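(* Let $n \ge 0$, let $Z = \sum_{j=1}^m P_j$ be a stable point cluster of degree $m$ in $\mathbb{P}^n(\mathbb{C})$, and fix nonzero row vectors $P_j \in \mathbb{C}^{n+1}$ representing its points. Let $\mathcal{H}$ be the set of positive definite Hermitian $(n+1)\times(n+1)$ matrices of determinant $1$ and $D(Q) = \sum_{j=1}^m \log(\bar{P}_j Q P_j^\top) - \frac{m}{n+1}\log\det Q$ for $Q \in \mathcal{H}$. Then $D$ has a unique critical point $z(Z)$ on $\mathcal{H}$, at which $D$ attains its global minimum, which is of the form $\log\theta$ for some $\theta > 0$. Moreover, $z(Z)$ does not depend on the choice of representing vectors $P_j$, so it depends only on $Z$.
   Context: A point cluster of degree $m$ in $\mathbb{P}^n$ is a formal sum $Z = \sum_{j=1}^m P_j$ of points; for a linear subspace $L$, $Z|_L$ is the sum of the points of $Z$ lying in $L$, and $\deg$ counts points with multiplicity. $Z$ is stable if $(n+1)\deg Z|_L < (\dim L+1)\deg Z$ for every linear subspace $\emptyset \ne L \subsetneq \mathbb{P}^n$. $\mathcal{H}$ is regarded as a real manifold of dimension $n(n+2)$. *)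

theory Defs
  imports "HOL-Analysis.Analysis"
begin

text \<open>Points of P^n are represented by nonzero vectors in complex^'n, where CARD('n) = n+1.
  A point cluster of degree m is a family P 0, ..., P (m-1) of such vectors.\<close>

definition conj_transpose :: "complex^'n^'n \<Rightarrow> complex^'n^'n" where
  "conj_transpose A = (\<chi> i j. cnj (A $ j $ i))"

definition hermitian_mat :: "complex^'n^'n \<Rightarrow> bool" where
  "hermitian_mat A \<longleftrightarrow> conj_transpose A = A"

definition herm_form :: "complex^'n \<Rightarrow> complex^'n^'n \<Rightarrow> complex" where
  "herm_form x A = (\<Sum>a\<in>UNIV. \<Sum>b\<in>UNIV. cnj (x $ a) * A $ a $ b * x $ b)"

definition pos_def_hermitian :: "complex^'n^'n \<Rightarrow> bool" where
  "pos_def_hermitian A \<longleftrightarrow> hermitian_mat A \<and>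
     (\<forall>x. x \<noteq> 0 \<longrightarrow> Im (herm_form x A) = 0 \<and> Re (herm_form x A) > 0)"

definition HH :: "(complex^'n^'n) set" where
  "HH = {Q. pos_def_hermitian Q \<and> det Q = 1}"

text \<open>Stability: for every linear subspace emptyset /= L /= P^n, i.e. complex
  linear subspace W of complex^'n with W /= {0} and W /= UNIV (dim L + 1 = vec.dim W),
  (n+1) deg Z|_L < (dim L + 1) deg Z.\<close>
definition stable_cluster :: "nat \<Rightarrow> (nat \<Rightarrow> complex^'n) \<Rightarrow> bool" where
  "stable_cluster m P \<longleftrightarrow>
     (\<forall>W :: (complex^'n) set. vec.subspace W \<and> W \<noteq> {0} \<and> W \<noteq> UNIV \<longrightarrow>
        CARD('n) * card {j. j < m \<and> P j \<in> W} < vec.dim W * m)"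

definition DD :: "nat \<Rightarrow> (nat \<Rightarrow> complex^'n) \<Rightarrow> complex^'n^'n \<Rightarrow> real" where
  "DD m P Q = (\<Sum>j<m. ln (Re (herm_form (P j) Q)))
              - real m / real CARD('n) * ln (Re (det Q))"

definition critical_on_HH :: "nat \<Rightarrow> (nat \<Rightarrow> complex^'n) \<Rightarrow> complex^'n^'n \<Rightarrow> bool" where
  "critical_on_HH m P Q \<longleftrightarrow> Q \<in> HH \<and>
     (\<forall>\<gamma> :: real \<Rightarrow> complex^'n^'n. (\<forall>t. \<gamma> t \<in> HH) \<and> \<gamma> 0 = Q \<and> \<gamma> differentiable (at 0)
        \<longrightarrow> ((\<lambda>t. DD m P (\<gamma> t)) has_real_derivative 0) (at 0))"

end

theory Submission
  imports Defs
begin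


definition ip :: "complex^'n \<Rightarrow> complex^'n \<Rightarrow> complex" where
  "ip x y = (\<Sum>a\<in>UNIV. cnj (x $ a) * y $ a)"

definition sf :: "complex^'n^'n \<Rightarrow> complex^'n \<Rightarrow> complex^'n \<Rightarrow> complex" where
  "sf A x y = (\<Sum>a\<in>UNIV. \<Sum>b\<in>UNIV. cnj (x $ a) * A $ a $ b * y $ b)"

lemma herm_form_sf: "herm_form x A = sf A x x"
  by (simp add: herm_form_def sf_def)

lemma sf_ip: "sf A x y = ip x (A *v y)"
  by (simp add: sf_def ip_def matrix_vector_mult_def sum_distrib_left mult.assoc)

lemma ip_cnj: "ip y x = cnj (ip x y)"
  by (simp add: ip_def mult.commute)

lemma ip_add_right: "ip x (y + z) = ip x y + ip x z"
  by (simp add: ip_def distrib_left sum.distrib)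
lemma ip_add_left: "ip (y + z) x = ip y x + ip z x"
  by (simp add: ip_def distrib_right sum.distrib)
lemma ip_diff_right: "ip x (y - z) = ip x y - ip x z"
  by (simp add: ip_def right_diff_distrib sum_subtractf)
lemma ip_diff_left: "ip (y - z) x = ip y x - ip z x"
  by (simp add: ip_def left_diff_distrib sum_subtractf)
lemma ip_smult_right: "ip x (c *s y) = c * ip x y"
  by (simp add: ip_def sum_distrib_left algebra_simps)
lemma ip_smult_left: "ip (c *s y) x = cnj c * ip y x"
  by (simp add: ip_def sum_distrib_left algebra_simps)
lemma ip_zero_right[simp]: "ip x 0 = 0" by (simp add: ip_def)
lemma ip_zero_left[simp]: "ip 0 x = 0" by (simp add: ip_def)
lemma ip_sum_right: "ip x (\<Sum>i\<in>S. f i) = (\<Sum>i\<in>S. ip x (f i))"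
  by (induct S rule: infinite_finite_induct) (simp_all add: ip_add_right)
lemma ip_sum_left: "ip (\<Sum>i\<in>S. f i) x = (\<Sum>i\<in>S. ip (f i) x)"
  by (induct S rule: infinite_finite_induct) (simp_all add: ip_add_left)
lemma cnj_mult_self: "cnj z * z = of_real ((cmod z)^2)"
  by (metis complex_norm_square mult.commute)

lemma ip_self: "ip x x = of_real (\<Sum>a\<in>UNIV. (cmod (x $ a))^2)"
  unfolding ip_def cnj_mult_self of_real_sum ..

lemma ip_self_norm: "ip x x = of_real ((norm x)^2)"
  unfolding ip_self norm_vec_def L2_set_def
  by (simp add: sum_nonneg)

lemma ip_self_eq0: "ip x x = 0 \<longleftrightarrow> x = 0"
  by (simp add: ip_self_norm)

lemma ip_matrix: "ip x (A *v y) = ip (conj_transpose A *v x) y"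
proof -
  have "ip x (A *v y) = (\<Sum>a\<in>UNIV. \<Sum>b\<in>UNIV. cnj (x $ a) * A $ a $ b * y $ b)"
    by (simp add: ip_def matrix_vector_mult_def sum_distrib_left mult.assoc)
  also have "\<dots> = (\<Sum>b\<in>UNIV. \<Sum>a\<in>UNIV. cnj (x $ a) * A $ a $ b * y $ b)"
    by (rule sum.swap)
  also have "\<dots> = ip (conj_transpose A *v x) y"
    by (simp add: ip_def matrix_vector_mult_def conj_transpose_def sum_distrib_left sum_distrib_right mult.commute mult.left_commute)
  finally show ?thesis .
qed

lemma herm_ip_matrix: "hermitian_mat A \<Longrightarrow> ip x (A *v y) = ip (A *v x) y"
  by (metis hermitian_mat_def ip_matrix)

lemma sf_herm_cnj: "hermitian_mat A \<Longrightarrow> sf A x y = cnj (sf A y x)"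
  by (metis herm_ip_matrix ip_cnj sf_ip)

lemma sf_add_right: "sf A x (y + z) = sf A x y + sf A x z"
  by (simp add: sf_ip matrix_vector_right_distrib ip_add_right)
lemma sf_add_left: "sf A (y + z) x = sf A y x + sf A z x"
  by (simp add: sf_ip ip_add_left)
lemma sf_diff_right: "sf A x (y - z) = sf A x y - sf A x z"
  by (simp add: sf_ip matrix_vector_mult_diff_distrib ip_diff_right)
lemma sf_diff_left: "sf A (y - z) x = sf A y x - sf A z x"
  by (simp add: sf_ip ip_diff_left)
lemma sf_smult_right: "sf A x (c *s y) = c * sf A x y"
  by (simp add: sf_ip ip_smult_right vector_scalar_commute)
lemma sf_smult_left: "sf A (c *s y) x = cnj c * sf A y x"
  by (simp add: sf_ip ip_smult_left)
lemma sf_zero_right[simp]: "sf A x 0 = 0" by (simp add: sf_def)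
lemma sf_zero_left[simp]: "sf A 0 x = 0" by (simp add: sf_def)
lemma sf_sum_right: "sf A x (\<Sum>i\<in>S. f i) = (\<Sum>i\<in>S. sf A x (f i))"
  by (induct S rule: infinite_finite_induct) (simp_all add: sf_add_right)
lemma sf_sum_left: "sf A (\<Sum>i\<in>S. f i) x = (\<Sum>i\<in>S. sf A (f i) x)"
  by (induct S rule: infinite_finite_induct) (simp_all add: sf_add_left)

lemma sf_id: "sf (mat 1) x y = ip x y"
  by (simp add: sf_ip)


lemma sf_mat_diff: "sf (A - B) x y = sf A x y - sf B x y"
  by (simp add: sf_def algebra_simps sum_subtractf)

lemma sf_axis_gen: "sf C (axis a c) (axis b d) = cnj c * C $ a $ b * d"
proof -
  have "sf C (axis a c) (axis b d) = ip (axis a c) (C *v axis b d)" by (simp add: sf_ip)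
  also have "C *v axis b d = (\<chi> i. C $ i $ b * d)"
    by (simp add: matrix_vector_mult_def axis_def vec_eq_iff if_distrib[of "\<lambda>x. _ * x"] cong: if_cong)
  also have "ip (axis a c) (\<chi> i. C $ i $ b * d) = cnj c * C $ a $ b * d"
    by (simp add: ip_def axis_def mult.assoc if_distrib[of cnj] if_distrib[of "\<lambda>x. x * _"] cong: if_cong)
  finally show ?thesis .
qed

lemma sf_axis: "sf C (axis a 1) (axis b 1) = C $ a $ b"
  by (simp add: sf_axis_gen)

lemma polarization_zero:
  fixes C :: "complex^'n^'n"
  assumes h: "\<And>x. sf C x x = 0"
  shows "C = 0"
proof -
  have "C $ a $ b = 0" for a b
  proof -
    have aa: "C $ a $ a = 0" "C $ b $ b = 0" using h[of "axis a 1"] h[of "axis b 1"]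
      by (simp_all add: sf_axis)
    have e: "sf C (axis a 1 + axis b c) (axis a 1 + axis b c)
        = C $ a $ a + C $ a $ b * c + cnj c * C $ b $ a + cnj c * C $ b $ b * c" for c
      by (simp add: sf_add_left sf_add_right sf_axis_gen)
    have 1: "C $ a $ b + C $ b $ a = 0" using e[of 1] h aa by simp
    have 2: "C $ a $ b * \<i> - \<i> * C $ b $ a = 0" using e[of "\<i>"] h aa by simp
    have "2 * \<i> * C$a$b = 0" using 1 2 by algebra
    then show ?thesis by simp
  qed
  then show ?thesis by (simp add: vec_eq_iff)
qed

lemma polarization:
  fixes A B :: "complex^'n^'n"
  assumes "\<And>x. sf A x x = sf B x x"
  shows "A = B"
  using polarization_zero[of "A - B"] assms by (simp add: sf_mat_diff)


definition outer :: "complex^'n \<Rightarrow> complex^'n^'n" where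
  "outer v = (\<chi> a b. v $ a * cnj (v $ b))"

definition mk :: "('n \<Rightarrow> complex^'n) \<Rightarrow> ('n \<Rightarrow> real) \<Rightarrow> complex^'n^'n" where
  "mk w \<mu> = (\<Sum>i\<in>UNIV. \<mu> i *\<^sub>R outer (w i))"

lemma sf_mat_add: "sf (A + B) x y = sf A x y + sf B x y"
  by (simp add: sf_def algebra_simps sum.distrib)
lemma sf_mat_zero[simp]: "sf 0 x y = 0" by (simp add: sf_def)
lemma sf_mat_sum: "sf (\<Sum>i\<in>S. f i) x y = (\<Sum>i\<in>S. sf (f i) x y)"
  by (induct S rule: infinite_finite_induct) (simp_all add: sf_mat_add)
lemma sf_mat_scaleR: "sf (r *\<^sub>R A) x y = of_real r * sf A x y"
  unfolding sf_def by (simp add: sum_distrib_left, simp add: scaleR_conv_of_real mult_ac)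
lemma outer_mult: "outer v *v y = ip v y *s v"
  by (simp add: outer_def matrix_vector_mult_def ip_def vec_eq_iff sum_distrib_left mult_ac)
lemma sf_outer: "sf (outer v) x y = ip x v * ip v y"
  by (simp add: sf_ip outer_mult ip_smult_right)

lemma mk_nth: "mk w \<mu> $ a $ b = (\<Sum>i\<in>UNIV. of_real (\<mu> i) * (w i $ a * cnj (w i $ b)))"
  by (simp add: mk_def outer_def sum_component, simp add: scaleR_conv_of_real)

lemma sf_mk: "sf (mk w \<mu>) x y = (\<Sum>i\<in>UNIV. of_real (\<mu> i) * (ip x (w i) * ip (w i) y))"
  by (simp add: mk_def sf_mat_sum sf_mat_scaleR sf_outer)

definition Wm :: "('n \<Rightarrow> complex^'n) \<Rightarrow> complex^'n^'n" where
  "Wm w = (\<chi> a i. w i $ a)"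

definition dg :: "('n \<Rightarrow> real) \<Rightarrow> complex^'n^'n" where
  "dg \<mu> = (\<chi> i k. if i = k then of_real (\<mu> i) else 0)"

lemma Wm_dg: "Wm w ** dg \<mu> = (\<chi> a i. w i $ a * of_real (\<mu> i))"
  by (simp add: vec_eq_iff matrix_matrix_mult_def Wm_def dg_def if_distrib[of "\<lambda>x. _ * x"] cong: if_cong)

lemma mk_factor: "mk w \<mu> = Wm w ** dg \<mu> ** conj_transpose (Wm w)"
  unfolding Wm_dg
  by (simp add: vec_eq_iff mk_nth matrix_matrix_mult_def Wm_def conj_transpose_def mult_ac)

lemma herm_form_mk: "herm_form x (mk w \<mu>) = of_real (\<Sum>i\<in>UNIV. \<mu> i * (cmod (ip (w i) x))^2)"
proof -
  have "herm_form x (mk w \<mu>) = (\<Sum>i\<in>UNIV. of_real (\<mu> i) * (cnj (ip (w i) x) * ip (w i) x))"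
    by (simp add: herm_form_sf sf_mk ip_cnj[of x])
  also have "\<dots> = of_real (\<Sum>i\<in>UNIV. \<mu> i * (cmod (ip (w i) x))^2)"
    by (simp add: cnj_mult_self of_real_sum)
  finally show ?thesis .
qed

lemma hermitian_mk: "hermitian_mat (mk w \<mu>)"
  by (simp add: hermitian_mat_def conj_transpose_def vec_eq_iff mk_nth mult.commute)

lemma det_cnj: "det (\<chi> i j. cnj (A $ i $ j)) = cnj (det (A::complex^'n^'n))"
  by (simp add: det_def)

lemma det_conj_transpose: "det (conj_transpose A) = cnj (det (A::complex^'n^'n))"
proof -
  have "conj_transpose A = transpose (\<chi> i j. cnj (A $ i $ j))"
    by (simp add: conj_transpose_def transpose_def)
  then show ?thesis by (simp add: det_cnj)
qed

lemma det_dg: "det (dg \<mu>) = of_real (\<Prod>i\<in>UNIV. \<mu> i)"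
  by (subst det_diagonal) (simp_all add: dg_def)

lemma mult_cnj_self: "z * cnj z = (of_real (cmod z))^2"
  by (metis complex_norm_square of_real_power)

lemma det_mk: "det (mk w \<mu>) = of_real ((\<Prod>i\<in>UNIV. \<mu> i) * (cmod (det (Wm w)))^2)"
  by (simp add: mk_factor det_mul det_conj_transpose det_dg mult_cnj_self mult_ac)


lemma pdh_herm: "pos_def_hermitian G \<Longrightarrow> hermitian_mat G"
  by (simp add: pos_def_hermitian_def)

lemma sf_self_real: "hermitian_mat A \<Longrightarrow> sf A x x = of_real (Re (sf A x x))"
proof -
  assume h: "hermitian_mat A"
  have "sf A x x = cnj (sf A x x)" by (rule sf_herm_cnj[OF h])
  then have "Im (sf A x x) = 0" by (simp add: complex_eq_iff)
  then show ?thesis by (simp add: complex_eq_iff)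
qed

lemma pdh_pos: "pos_def_hermitian G \<Longrightarrow> x \<noteq> 0 \<Longrightarrow> Re (sf G x x) > 0"
  by (simp add: pos_def_hermitian_def herm_form_sf)

lemma pdh_nonneg: "pos_def_hermitian G \<Longrightarrow> Re (sf G x x) \<ge> 0"
  by (cases "x = 0") (auto dest: pdh_pos[of G x])

lemma pdh_nz: "pos_def_hermitian G \<Longrightarrow> x \<noteq> 0 \<Longrightarrow> sf G x x \<noteq> 0"
  using pdh_pos by fastforce

lemma cont_sf_right: "continuous_on S (\<lambda>x. sf A v x)"
  unfolding sf_def by (intro continuous_intros)

lemma cont_sf_self: "continuous_on S (\<lambda>x. Re (sf A x x))"
  unfolding sf_def by (intro continuous_intros)

lemma sf_expand2: "sf A (x + c *s y) (x + c *s y)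
   = sf A x x + c * sf A x y + cnj c * sf A y x + cnj c * c * sf A y y"
  unfolding sf_add_left sf_add_right sf_smult_left sf_smult_right
  by (simp add: algebra_simps)

lemma sf_scale_self: "sf A (c *s y) (c *s y) = cnj c * c * sf A y y"
  by (simp add: sf_smult_left sf_smult_right mult_ac)

lemma scaleR_as_smult: "(r::real) *\<^sub>R (x::complex^'n) = of_real r *s x"
  by (simp add: vec_eq_iff, simp add: scaleR_conv_of_real)

lemma pd_lower:
  assumes G: "pos_def_hermitian G"
  shows "\<exists>c>0. \<forall>x. c * (norm x)^2 \<le> Re (sf G x x)"
proof -
  have ne: "sphere (0::complex^'n) 1 \<noteq> {}"
  proof -
    have "axis undefined (1::complex) \<in> sphere (0::complex^'n) 1" by (simp add: norm_axis_1)
    then show ?thesis by blast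
  qed
  obtain x1 where x1: "x1 \<in> sphere 0 1" and min: "\<forall>y\<in>sphere 0 1. Re (sf G x1 x1) \<le> Re (sf G y y)"
    using continuous_attains_inf[OF compact_sphere ne cont_sf_self[of _ G]] by blast
  have x1nz: "x1 \<noteq> 0" using x1 by auto
  define c where "c = Re (sf G x1 x1)"
  have cpos: "c > 0" using pdh_pos[OF G x1nz] by (simp add: c_def)
  have "c * (norm x)^2 \<le> Re (sf G x x)" for x
  proof (cases "x = 0")
    case True then show ?thesis by simp
  next
    case False
    define v where "v = (1 / norm x) *\<^sub>R x"
    have v: "v \<in> sphere 0 1" using False by (simp add: v_def)
    have xv: "x = of_real (norm x) *s v"
      using False by (simp add: v_def scaleR_as_smult[symmetric])
    have "Re (sf G x x) = (norm x)^2 * Re (sf G v v)"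
      by (subst xv, subst xv, simp add: sf_scale_self power2_eq_square)
    moreover have "c \<le> Re (sf G v v)" using min v by (simp add: c_def)
    ultimately show ?thesis by (metis mult.commute mult_right_mono zero_le_power2)
  qed
  with cpos show ?thesis by blast
qed


definition orthoG :: "complex^'n^'n \<Rightarrow> ('n \<Rightarrow> complex^'n) \<Rightarrow> bool" where
  "orthoG G u \<longleftrightarrow> (\<forall>i k. sf G (u i) (u k) = (if i = k then 1 else 0))"

lemma orth_indep:
  assumes G: "pos_def_hermitian G"
    and nz: "\<And>v. v \<in> S \<Longrightarrow> sf G v v \<noteq> 0"
    and orth: "\<And>v w. v \<in> S \<Longrightarrow> w \<in> S \<Longrightarrow> v \<noteq> w \<Longrightarrow> sf G v w = 0"
  shows "vec.independent S"
  unfolding vec.independent_explicit_module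
proof (intro allI impI)
  fix t u v
  assume t: "finite t" "t \<subseteq> S" and s: "(\<Sum>v\<in>t. u v *s v) = 0" and v: "v \<in> t"
  have "0 = sf G v (\<Sum>w\<in>t. u w *s w)" using s by simp
  also have "\<dots> = (\<Sum>w\<in>t. u w * sf G v w)" by (simp add: sf_sum_right sf_smult_right)
  also have "\<dots> = u v * sf G v v + (\<Sum>w\<in>t - {v}. u w * sf G v w)"
    by (rule sum.remove[OF t(1) v])
  also have "(\<Sum>w\<in>t - {v}. u w * sf G v w) = 0"
    using t v by (intro sum.neutral) (auto intro!: orth)
  finally have "u v * sf G v v = 0" by simp
  then show "u v = 0" using nz[of v] t v by auto
qed

lemma orthoG_inj: "orthoG G u \<Longrightarrow> inj u"
  unfolding orthoG_def inj_def
proof (intro allI impI)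
  fix x y assume h: "\<forall>i k. sf G (u i) (u k) = (if i = k then 1 else 0)" and e: "u x = u y"
  have "sf G (u x) (u y) = 1" using h e by (metis (full_types))
  then show "x = y" using h by (metis zero_neq_one)
qed

lemma expansion:
  fixes u :: "'n \<Rightarrow> complex^'n" and G :: "complex^'n^'n"
  assumes G: "pos_def_hermitian G" and u: "orthoG G u"
  shows "x = (\<Sum>i\<in>UNIV. sf G (u i) x *s u i)"
proof (rule ccontr)
  assume ne: "x \<noteq> (\<Sum>i\<in>UNIV. sf G (u i) x *s u i)"
  define y where "y = x - (\<Sum>i\<in>UNIV. sf G (u i) x *s u i)"
  have ynz: "y \<noteq> 0" using ne by (simp add: y_def)
  have yo: "sf G (u k) y = 0" for k
  proof -
    have "sf G (u k) y = sf G (u k) x - (\<Sum>i\<in>UNIV. sf G (u i) x * sf G (u k) (u i))"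
      by (simp add: y_def sf_diff_right sf_sum_right sf_smult_right)
    also have "(\<Sum>i\<in>UNIV. sf G (u i) x * sf G (u k) (u i)) = sf G (u k) x"
      using u by (simp add: orthoG_def if_distrib[of "\<lambda>z. _ * z"] cong: if_cong)
    finally show ?thesis by simp
  qed
  have yo2: "sf G y (u k) = 0" for k
    using sf_herm_cnj[OF pdh_herm[OF G], of y "u k"] yo[of k] by simp
  define S where "S = insert y (range u)"
  have ind: "vec.independent S"
  proof (rule orth_indep[OF G])
    fix v assume "v \<in> S"
    then show "sf G v v \<noteq> 0" using pdh_nz[OF G ynz] u by (auto simp: S_def orthoG_def)
  next
    fix v w assume "v \<in> S" "w \<in> S" "v \<noteq> w"
    then show "sf G v w = 0" using u yo yo2 by (auto simp: S_def orthoG_def)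
  qed
  have ynot: "y \<notin> range u"
  proof
    assume "y \<in> range u"
    then obtain k where "y = u k" by blast
    then have "sf G (u k) (u k) = 0" using yo[of k] by simp
    then show False using u by (simp add: orthoG_def)
  qed
  have "card S = Suc CARD('n)"
    using ynot orthoG_inj[OF u] by (simp add: S_def card_image)
  moreover have "card S \<le> CARD('n)"
    using vec.independent_bound_general[OF ind] dim_subset_UNIV_cart_gen[of S] by simp
  ultimately show False by simp
qed

lemma expansion_nz:
  assumes G: "pos_def_hermitian G" and u: "orthoG G u" and x: "x \<noteq> 0"
  shows "\<exists>i. sf G (u i) x \<noteq> 0"
proof (rule ccontr)
  assume "\<not> ?thesis"
  then have "x = (\<Sum>i\<in>UNIV. 0 *s u i)" using expansion[OF G u, of x] by simp
  then show False using x by simp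
qed

lemma sf_expansion:
  assumes G: "pos_def_hermitian G" and u: "orthoG G u"
  shows "sf A x y = (\<Sum>i\<in>UNIV. \<Sum>k\<in>UNIV. cnj (sf G (u i) x) * sf G (u k) y * sf A (u i) (u k))"
proof -
  have "sf A x y = sf A (\<Sum>i\<in>UNIV. sf G (u i) x *s u i) (\<Sum>k\<in>UNIV. sf G (u k) y *s u k)"
    using expansion[OF G u, of x] expansion[OF G u, of y] by simp
  also have "\<dots> = (\<Sum>i\<in>UNIV. \<Sum>k\<in>UNIV. cnj (sf G (u i) x) * sf G (u k) y * sf A (u i) (u k))"
    unfolding sf_sum_left sf_smult_left sf_sum_right sf_smult_right sum_distrib_left
    by (subst sum.swap) (simp add: mult_ac)
  finally show ?thesis .
qed

lemma eig_sf:
  assumes "\<And>i. A *v u i = of_real (\<mu> i) *s (G *v u i)" and u: "orthoG G u"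
  shows "sf A (u i) (u k) = (if i = k then of_real (\<mu> i) else 0)"
proof -
  have "sf A (u i) (u k) = of_real (\<mu> k) * sf G (u i) (u k)"
    unfolding sf_ip assms ip_smult_right ..
  then show ?thesis using u by (simp add: orthoG_def)
qed

lemma eig_herm_form:
  assumes G: "pos_def_hermitian G" and u: "orthoG G u"
    and e: "\<And>i. A *v u i = of_real (\<mu> i) *s (G *v u i)"
  shows "sf A x x = of_real (\<Sum>i\<in>UNIV. \<mu> i * (cmod (sf G (u i) x))^2)"
proof -
  have "sf A x x = (\<Sum>i\<in>UNIV. \<Sum>k\<in>UNIV. cnj (sf G (u i) x) * sf G (u k) x *
          (if i = k then of_real (\<mu> i) else 0))"
    using sf_expansion[OF G u, of A x x] eig_sf[OF e u] by simp
  also have "\<dots> = (\<Sum>i\<in>UNIV. of_real (\<mu> i) * (cnj (sf G (u i) x) * sf G (u i) x))"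
    by (simp add: if_distrib[of "\<lambda>z. _ * z"] mult_ac cong: if_cong)
  also have "\<dots> = of_real (\<Sum>i\<in>UNIV. \<mu> i * (cmod (sf G (u i) x))^2)"
    by (simp add: cnj_mult_self of_real_sum)
  finally show ?thesis .
qed


lemma cont_sf_both: "continuous_on S (\<lambda>x. sf A x x)"
  unfolding sf_def by (intro continuous_intros)

lemma quad_zero:
  fixes r K :: real
  assumes h: "\<And>t. 2 * t * r + t^2 * K \<le> 0"
  shows "r = 0"
proof (rule ccontr)
  assume r: "r \<noteq> 0"
  define d where "d = \<bar>K\<bar> + 1"
  define t where "t = r / d"
  have d: "d > 0" by (simp add: d_def)
  have "2 * t * r + t^2 * K = r^2 * (2 * d + K) / d^2"
    using d by (simp add: t_def field_simps power2_eq_square)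
  moreover have "r^2 * (2 * d + K) / d^2 > 0"
    using r d by (intro divide_pos_pos mult_pos_pos) (auto simp: d_def)
  ultimately show False using h[of t] by simp
qed

lemma spectral_step:
  fixes G A :: "complex^'n^'n" and vs :: "(complex^'n) list"
  assumes G: "pos_def_hermitian G" and A: "hermitian_mat A"
    and on: "\<And>i l. i < length vs \<Longrightarrow> l < length vs \<Longrightarrow> sf G (vs!i) (vs!l) = (if i = l then 1 else 0)"
    and eg: "\<And>i. i < length vs \<Longrightarrow> \<exists>\<mu>::real. A *v vs!i = of_real \<mu> *s (G *v vs!i)"
    and len: "length vs < CARD('n)"
  shows "\<exists>x0 \<mu>. (\<forall>l<length vs. sf G (vs!l) x0 = 0) \<and> sf G x0 x0 = 1 \<and>
           A *v x0 = of_real \<mu> *s (G *v x0)"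
proof -
  define k where "k = length vs"
  define W where "W = (\<Inter>l\<in>{..<k}. {x. sf G (vs!l) x = 0})"
  have inW: "x \<in> W \<longleftrightarrow> (\<forall>l<k. sf G (vs!l) x = 0)" for x by (auto simp: W_def)
  have Wlin: "x \<in> W \<Longrightarrow> y \<in> W \<Longrightarrow> x + c *s y \<in> W" for x y c
    by (simp add: inW sf_add_right sf_smult_right)
  have Wlin2: "x \<in> W \<Longrightarrow> y \<in> W \<Longrightarrow> x - c *s y \<in> W" for x y c
    by (simp add: inW sf_diff_right sf_smult_right)
  have Wsc: "y \<in> W \<Longrightarrow> c *s y \<in> W" for y c
    by (simp add: inW sf_smult_right)
  define pr where "pr x = x - (\<Sum>l<k. sf G (vs!l) x *s vs!l)" for x
  have pr_in: "pr x \<in> W" for x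
  proof -
    have "sf G (vs!l') (pr x) = 0" if l': "l' < k" for l'
    proof -
      have "sf G (vs!l') (pr x) = sf G (vs!l') x - (\<Sum>l<k. sf G (vs!l) x * sf G (vs!l') (vs!l))"
        by (simp add: pr_def sf_diff_right sf_sum_right sf_smult_right)
      also have "(\<Sum>l<k. sf G (vs!l) x * sf G (vs!l') (vs!l)) = (\<Sum>l<k. if l = l' then sf G (vs!l) x else 0)"
        using l' by (intro sum.cong) (auto simp: on k_def)
      also have "\<dots> = sf G (vs!l') x" using l' by simp
      finally show ?thesis by simp
    qed
    then show ?thesis by (simp add: inW)
  qed
  have pr_decomp: "x = pr x + (\<Sum>l<k. sf G (vs!l) x *s vs!l)" for x by (simp add: pr_def)
  obtain x1 where x1: "x1 \<notin> vec.span (set vs)"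
  proof -
    have "\<not> (UNIV \<subseteq> vec.span (set vs))"
    proof
      assume "UNIV \<subseteq> vec.span (set vs)"
      then have "vec.dim (UNIV :: (complex^'n) set) \<le> card (set vs)"
        by (intro vec.dim_le_card) auto
      also have "\<dots> \<le> length vs" by (rule card_length)
      finally show False using len by (simp add: vec_dim_card card_cart_basis)
    qed
    then show ?thesis using that by blast
  qed
  define r where "r = pr x1"
  have rW: "r \<in> W" by (simp add: r_def pr_in)
  have rnz: "r \<noteq> 0"
  proof
    assume "r = 0"
    then have "x1 = (\<Sum>l<k. sf G (vs!l) x1 *s vs!l)" using pr_decomp[of x1] by (simp add: r_def)
    also have "\<dots> \<in> vec.span (set vs)"
      by (intro vec.span_sum vec.span_scale vec.span_base) (auto simp: k_def)
    finally show False using x1 by simp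
  qed
  have Gherm: "hermitian_mat G" using G by (rule pdh_herm)
  have sfGreal: "sf G x x = of_real (Re (sf G x x))" for x using sf_self_real[OF Gherm] .
  have sfAreal: "sf A x x = of_real (Re (sf A x x))" for x using sf_self_real[OF A] .
  have normalize: "of_real (1 / sqrt (Re (sf G z z))) *s z \<in> W \<and>
      sf G (of_real (1 / sqrt (Re (sf G z z))) *s z) (of_real (1 / sqrt (Re (sf G z z))) *s z) = 1 \<and>
      sf A (of_real (1 / sqrt (Re (sf G z z))) *s z) (of_real (1 / sqrt (Re (sf G z z))) *s z)
        = of_real (Re (sf A z z) / Re (sf G z z))"
    if z: "z \<in> W" "z \<noteq> 0" for z
  proof -
    define g where "g = Re (sf G z z)"
    have g: "g > 0" using pdh_pos[OF G z(2)] by (simp add: g_def)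
    have cc: "cnj (of_real (1 / sqrt g)) * of_real (1 / sqrt g) = (of_real (1 / g) :: complex)"
      using g by (simp add: real_sqrt_mult[symmetric] of_real_mult[symmetric] del: of_real_mult)
    have sq: "complex_of_real (sqrt g) * complex_of_real (sqrt g) = complex_of_real g"
      using g by (simp add: of_real_mult[symmetric] del: of_real_mult)
    show ?thesis
      unfolding g_def[symmetric]
      using Wsc[OF z(1)] g
      by (simp add: sf_scale_self cc sfGreal[of z, folded g_def] sq) (subst sfAreal, simp)
  qed
  define Sph where "Sph = W \<inter> {x. sf G x x = 1}"
  have Sph_ne: "Sph \<noteq> {}" using normalize[OF rW rnz] by (auto simp: Sph_def)
  have Sph_closed: "closed Sph"
    unfolding Sph_def W_def
    by (intro closed_Int closed_INT ballI closed_Collect_eq cont_sf_right cont_sf_both continuous_on_const)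
  obtain c where c: "c > 0" "\<And>x. c * (norm x)^2 \<le> Re (sf G x x)" using pd_lower[OF G] by blast
  have Sph_bdd: "bounded Sph"
    unfolding bounded_iff
  proof (intro exI ballI)
    fix x assume "x \<in> Sph"
    then have "c * (norm x)^2 \<le> 1" using c(2)[of x] by (simp add: Sph_def)
    then show "norm x \<le> max 1 (1 / c)"
    proof (cases "norm x \<le> 1")
      case True then show ?thesis by simp
    next
      case False
      have 1: "norm x * 1 \<le> norm x * norm x" using False by (intro mult_left_mono) auto
      have 2: "norm x * norm x \<le> 1 / c"
        using \<open>c * (norm x)^2 \<le> 1\<close> c(1) by (simp add: pos_le_divide_eq power2_eq_square mult.commute)
      show ?thesis using 1 2 by simp
    qed
  qed
  have Sph_compact: "compact Sph" using Sph_closed Sph_bdd by (simp add: compact_eq_bounded_closed)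
  obtain x0 where x0: "x0 \<in> Sph" and xmax: "\<And>y. y \<in> Sph \<Longrightarrow> Re (sf A y y) \<le> Re (sf A x0 x0)"
    using continuous_attains_sup[OF Sph_compact Sph_ne cont_sf_self[of Sph A]] by blast
  define \<mu> where "\<mu> = Re (sf A x0 x0)"
  have x0W: "x0 \<in> W" and x0n: "sf G x0 x0 = 1" using x0 by (auto simp: Sph_def)
  have x0nz: "x0 \<noteq> 0" using x0n by auto
  have sfA0: "sf A x0 x0 = of_real \<mu>" using sfAreal[of x0] by (simp add: \<mu>_def)
  have ratio: "Re (sf A z z) \<le> \<mu> * Re (sf G z z)" if z: "z \<in> W" for z
  proof (cases "z = 0")
    case True then show ?thesis by simp
  next
    case False
    have g: "Re (sf G z z) > 0" using pdh_pos[OF G False] .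
    have "of_real (1 / sqrt (Re (sf G z z))) *s z \<in> Sph" using normalize[OF z False] by (simp add: Sph_def)
    from xmax[OF this] normalize[OF z False]
    have "Re (sf A z z) / Re (sf G z z) \<le> \<mu>" by (simp add: \<mu>_def)
    then show ?thesis using g by (simp add: divide_le_eq mult.commute)
  qed
  have orthA: "sf A x0 y = 0" if y: "y \<in> W" "sf G x0 y = 0" for y
  proof -
    define a where "a = sf A x0 y"
    have yG: "sf G y x0 = 0" using sf_herm_cnj[OF Gherm, of y x0] y(2) by simp
    have yA: "sf A y x0 = cnj a" using sf_herm_cnj[OF A, of y x0] by (simp add: a_def)
    define K where "K = Re (sf A y y) - \<mu> * Re (sf G y y)"
    have gen: "Re (sf A (x0 + c *s y) (x0 + c *s y)) \<le> \<mu> * Re (sf G (x0 + c *s y) (x0 + c *s y))" for c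
      using ratio[OF Wlin[OF x0W y(1)]] .
    have 1: "2 * t * Re a + t^2 * K \<le> 0" for t
    proof -
      have e1: "sf A (x0 + of_real t *s y) (x0 + of_real t *s y) = of_real \<mu> + of_real t * a + of_real t * cnj a + of_real (t^2) * sf A y y"
        by (simp add: sf_expand2 sfA0 yA a_def[symmetric] power2_eq_square)
      have e2: "sf G (x0 + of_real t *s y) (x0 + of_real t *s y) = 1 + of_real (t^2) * sf G y y"
        by (simp add: sf_expand2 x0n yG y(2) power2_eq_square)
      show ?thesis using gen[of "of_real t"] unfolding e1 e2 K_def
        by (simp add: algebra_simps power2_eq_square)
    qed
    have 2: "2 * t * (- Im a) + t^2 * K \<le> 0" for t
    proof -
      have e1: "sf A (x0 + (of_real t * \<i>) *s y) (x0 + (of_real t * \<i>) *s y) = of_real \<mu> + of_real t * \<i> * a - of_real t * \<i> * cnj a + of_real (t^2) * sf A y y"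
        by (simp add: sf_expand2 sfA0 yA a_def[symmetric] power2_eq_square algebra_simps)
      have e2: "sf G (x0 + (of_real t * \<i>) *s y) (x0 + (of_real t * \<i>) *s y) = 1 + of_real (t^2) * sf G y y"
        by (simp add: sf_expand2 x0n yG y(2) power2_eq_square algebra_simps)
      show ?thesis using gen[of "of_real t * \<i>"] unfolding e1 e2 K_def
        by (simp add: algebra_simps power2_eq_square)
    qed
    have "Re a = 0" using quad_zero[OF 1] .
    moreover have "- Im a = 0" using quad_zero[OF 2] .
    ultimately show ?thesis by (simp add: a_def[symmetric] complex_eq_iff)
  qed
  define z where "z = A *v x0 - of_real \<mu> *s (G *v x0)"
  have ipz: "ip y z = sf A y x0 - of_real \<mu> * sf G y x0" for y
    by (simp add: z_def ip_diff_right ip_smult_right sf_ip)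
  have zW: "ip y z = 0" if y: "y \<in> W" for y
  proof -
    define \<alpha> where "\<alpha> = sf G x0 y"
    define y' where "y' = y - \<alpha> *s x0"
    have y'W: "y' \<in> W" using Wlin2[OF y x0W] by (simp add: y'_def)
    have y'o: "sf G x0 y' = 0" by (simp add: y'_def sf_diff_right sf_smult_right x0n \<alpha>_def)
    have A0: "sf A x0 y' = 0" by (rule orthA[OF y'W y'o])
    have yy: "y = y' + \<alpha> *s x0" by (simp add: y'_def)
    have s1: "sf A y x0 = cnj \<alpha> * of_real \<mu>"
      using sf_herm_cnj[OF A, of y' x0] A0
      by (subst yy) (simp add: sf_add_left sf_smult_left sfA0)
    have s2: "sf G y x0 = cnj \<alpha>"
      using sf_herm_cnj[OF Gherm, of y' x0] y'o
      by (subst yy) (simp add: sf_add_left sf_smult_left x0n)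
    show ?thesis by (simp add: ipz s1 s2)
  qed
  have zv: "ip (vs!l) z = 0" if l: "l < k" for l
  proof -
    have g0: "sf G (vs!l) x0 = 0" using x0W l by (simp add: inW)
    obtain \<nu> :: real where \<nu>: "A *v vs!l = of_real \<nu> *s (G *v vs!l)" using eg l by (auto simp: k_def)
    have "sf A x0 (vs!l) = of_real \<nu> * sf G x0 (vs!l)"
      by (simp add: sf_ip \<nu> ip_smult_right)
    moreover have "sf G x0 (vs!l) = 0" using sf_herm_cnj[OF Gherm, of x0 "vs!l"] g0 by simp
    ultimately have "sf A x0 (vs!l) = 0" by simp
    then have "sf A (vs!l) x0 = 0" using sf_herm_cnj[OF A, of "vs!l" x0] by simp
    then show ?thesis by (simp add: ipz g0)
  qed
  have "ip z z = ip (pr z) z + (\<Sum>l<k. cnj (sf G (vs!l) z) * ip (vs!l) z)"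
    by (subst (1) pr_decomp[of z]) (simp add: ip_add_left ip_sum_left ip_smult_left)
  also have "\<dots> = 0" using zW[OF pr_in] zv by simp
  finally have "z = 0" by (simp add: ip_self_eq0)
  then have eig: "A *v x0 = of_real \<mu> *s (G *v x0)" by (simp add: z_def)
  show ?thesis
    using x0W x0n eig by (auto simp: inW k_def)
qed


lemma spectral_list:
  fixes G A :: "complex^'n^'n"
  assumes G: "pos_def_hermitian G" and A: "hermitian_mat A"
  shows "k \<le> CARD('n) \<Longrightarrow> \<exists>vs. length vs = k \<and>
     (\<forall>i<k. \<forall>l<k. sf G (vs!i) (vs!l) = (if i = l then 1 else 0)) \<and>
     (\<forall>i<k. \<exists>\<mu>::real. A *v vs!i = of_real \<mu> *s (G *v vs!i))"
proof (induction k)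
  case 0 then show ?case by simp
next
  case (Suc k)
  then obtain vs where vs: "length vs = k"
    "\<forall>i<k. \<forall>l<k. sf G (vs!i) (vs!l) = (if i = l then 1 else 0)"
    "\<forall>i<k. \<exists>\<mu>::real. A *v vs!i = of_real \<mu> *s (G *v vs!i)" by auto
  obtain x0 \<mu> where x0: "\<forall>l<length vs. sf G (vs!l) x0 = 0" "sf G x0 x0 = 1"
      "A *v x0 = of_real \<mu> *s (G *v x0)"
    using spectral_step[OF G A, of vs] vs Suc.prems by auto
  have x0': "\<forall>l<length vs. sf G x0 (vs!l) = 0"
    using x0(1) sf_herm_cnj[OF pdh_herm[OF G], of x0] by simp
  show ?case
  proof (intro exI[of _ "vs @ [x0]"] conjI allI impI)
    show "length (vs @ [x0]) = Suc k" using vs by simp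
  next
    fix i l assume "i < Suc k" "l < Suc k"
    then show "sf G ((vs @ [x0]) ! i) ((vs @ [x0]) ! l) = (if i = l then 1 else 0)"
      using vs x0 x0' by (auto simp: nth_append less_Suc_eq)
  next
    fix i assume "i < Suc k"
    then show "\<exists>\<mu>::real. A *v (vs @ [x0]) ! i = of_real \<mu> *s (G *v (vs @ [x0]) ! i)"
      using vs x0 by (auto simp: nth_append less_Suc_eq)
  qed
qed

lemma spectral:
  fixes G A :: "complex^'n^'n"
  assumes G: "pos_def_hermitian G" and A: "hermitian_mat A"
  shows "\<exists>u \<mu>. orthoG G u \<and> (\<forall>i. A *v u i = of_real (\<mu> i) *s (G *v u i))"
proof -
  obtain vs where vs: "length vs = CARD('n)"
    "\<forall>i<CARD('n). \<forall>l<CARD('n). sf G (vs!i) (vs!l) = (if i = l then 1 else 0)"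
    "\<forall>i<CARD('n). \<exists>\<mu>::real. A *v vs!i = of_real \<mu> *s (G *v vs!i)"
    using spectral_list[OF G A, of "CARD('n)"] by auto
  obtain e :: "'n \<Rightarrow> nat" where e: "bij_betw e UNIV {0..<CARD('n)}"
    using ex_bij_betw_finite_nat[of "UNIV :: 'n set"] by auto
  have elt: "e i < CARD('n)" for i using e by (auto simp: bij_betw_def)
  have einj: "e i = e k \<longleftrightarrow> i = k" for i k using e by (auto simp: bij_betw_def inj_def)
  obtain mu where mu: "\<forall>i<CARD('n). A *v vs!i = of_real (mu i) *s (G *v vs!i)"
    using vs(3) by metis
  show ?thesis
  proof (intro exI conjI allI)
    show "orthoG G (\<lambda>i. vs ! e i)" using vs(2) elt einj by (simp add: orthoG_def)
  next
    fix i show "A *v vs ! e i = of_real (mu (e i)) *s (G *v vs ! e i)" using mu elt by simp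
  qed
qed


lemma pdh_id: "pos_def_hermitian (mat 1 :: complex^'n^'n)"
proof -
  have h: "hermitian_mat (mat 1 :: complex^'n^'n)"
    by (simp add: hermitian_mat_def conj_transpose_def mat_def vec_eq_iff)
  have "herm_form x (mat 1) = of_real ((norm x)^2)" for x :: "complex^'n"
    by (simp add: herm_form_sf sf_id ip_self_norm)
  then show ?thesis using h by (simp add: pos_def_hermitian_def)
qed

lemma det_id: "det (mat 1 :: complex^'n^'n) = 1" by simp

lemma id_HH: "(mat 1 :: complex^'n^'n) \<in> HH"
  by (simp add: HH_def pdh_id)

lemma ip_frame: "hermitian_mat G \<Longrightarrow> ip (G *v u) x = sf G u x"
  by (simp add: sf_ip herm_ip_matrix)

lemma herm_form_frame:
  assumes G: "pos_def_hermitian G"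
  shows "herm_form x (mk (\<lambda>i. G *v u i) \<mu>) = of_real (\<Sum>i\<in>UNIV. \<mu> i * (cmod (sf G (u i) x))^2)"
  by (simp add: herm_form_mk ip_frame[OF pdh_herm[OF G]])

lemma mk_one_frame:
  assumes G: "pos_def_hermitian G" and u: "orthoG G u"
  shows "mk (\<lambda>i. G *v u i) (\<lambda>_. 1) = G"
proof (rule polarization)
  fix x
  have e: "\<And>i. G *v u i = of_real 1 *s (G *v u i)" by simp
  show "sf (mk (\<lambda>i. G *v u i) (\<lambda>_. 1)) x x = sf G x x"
    using herm_form_frame[OF G, of x u "\<lambda>_. 1"] eig_herm_form[OF G u e, of x]
    by (simp add: herm_form_sf)
qed

lemma det_frame:
  assumes G: "pos_def_hermitian G" and u: "orthoG G u"
  shows "det (mk (\<lambda>i. G *v u i) \<mu>) = of_real (\<Prod>i\<in>UNIV. \<mu> i) * det G"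
proof -
  have "det G = of_real ((cmod (det (Wm (\<lambda>i. G *v u i))))^2)"
    using det_mk[of "\<lambda>i. G *v u i" "\<lambda>_. 1"] mk_one_frame[OF G u] by simp
  then show ?thesis by (simp add: det_mk)
qed

lemma frame_HH:
  fixes G :: "complex^'n^'n"
  assumes G: "pos_def_hermitian G" and u: "orthoG G u" and dG: "det G = 1"
    and pos: "\<And>i. \<mu> i > 0" and pr: "(\<Prod>i\<in>UNIV. \<mu> i) = 1"
  shows "mk (\<lambda>i. G *v u i) \<mu> \<in> HH"
proof -
  have pd: "pos_def_hermitian (mk (\<lambda>i. G *v u i) \<mu>)"
    unfolding pos_def_hermitian_def
  proof (intro conjI allI impI)
    show "hermitian_mat (mk (\<lambda>i. G *v u i) \<mu>)" by (rule hermitian_mk)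
  next
    fix x :: "complex^'n" assume x: "x \<noteq> 0"
    show "Im (herm_form x (mk (\<lambda>i. G *v u i) \<mu>)) = 0"
      by (simp add: herm_form_frame[OF G])
    obtain i where i: "sf G (u i) x \<noteq> 0" using expansion_nz[OF G u x] by blast
    have "0 < \<mu> i * (cmod (sf G (u i) x))^2" using i pos[of i] by simp
    also have "\<dots> \<le> (\<Sum>i\<in>UNIV. \<mu> i * (cmod (sf G (u i) x))^2)"
      by (rule member_le_sum) (auto intro: mult_nonneg_nonneg less_imp_le[OF pos])
    finally show "Re (herm_form x (mk (\<lambda>i. G *v u i) \<mu>)) > 0"
      by (simp add: herm_form_frame[OF G])
  qed
  have "det (mk (\<lambda>i. G *v u i) \<mu>) = 1" by (simp add: det_frame[OF G u] pr dG)
  then show ?thesis using pd by (simp add: HH_def)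
qed

lemma HH_decomp:
  assumes G: "pos_def_hermitian G" and dG: "det G = 1" and Q: "Q \<in> HH"
  shows "\<exists>u \<mu>. orthoG G u \<and> (\<forall>i. \<mu> i > 0) \<and> (\<Prod>i\<in>UNIV. \<mu> i) = 1 \<and>
     Q = mk (\<lambda>i. G *v u i) \<mu>"
proof -
  have Qp: "pos_def_hermitian Q" and dQ: "det Q = 1" using Q by (auto simp: HH_def)
  obtain u \<mu> where u: "orthoG G u" and e: "\<And>i. Q *v u i = of_real (\<mu> i) *s (G *v u i)"
    using spectral[OF G pdh_herm[OF Qp]] by blast
  have Qeq: "Q = mk (\<lambda>i. G *v u i) \<mu>"
  proof (rule polarization)
    fix x show "sf Q x x = sf (mk (\<lambda>i. G *v u i) \<mu>) x x"
      using herm_form_frame[OF G, of x u \<mu>] eig_herm_form[OF G u e, of x]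
      by (simp add: herm_form_sf)
  qed
  have pos: "\<mu> i > 0" for i
  proof -
    have "sf G (u i) (u i) = 1" using u by (simp add: orthoG_def)
    then have "u i \<noteq> 0" by auto
    then have "Re (sf Q (u i) (u i)) > 0" by (rule pdh_pos[OF Qp])
    then show ?thesis using eig_sf[OF e u, of i i] by simp
  qed
  have "of_real (\<Prod>i\<in>UNIV. \<mu> i) * det G = 1"
    using det_frame[OF G u, of \<mu>] Qeq dQ by simp
  then have "complex_of_real (\<Prod>i\<in>UNIV. \<mu> i) = complex_of_real 1" using dG by simp
  then have pr: "(\<Prod>i\<in>UNIV. \<mu> i) = 1" by (simp only: of_real_eq_iff)
  show ?thesis using u pos pr Qeq by blast
qed

lemma DD_HH: "Q \<in> HH \<Longrightarrow> DD m P Q = (\<Sum>j<m. ln (Re (herm_form (P j) Q)))"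
  by (simp add: DD_def HH_def)

lemma DD_frame:
  assumes G: "pos_def_hermitian G" and u: "orthoG G u" and dG: "det G = 1"
    and pos: "\<And>i. \<mu> i > 0" and pr: "(\<Prod>i\<in>UNIV. \<mu> i) = 1"
  shows "DD m P (mk (\<lambda>i. G *v u i) \<mu>) = (\<Sum>j<m. ln (\<Sum>i\<in>UNIV. \<mu> i * (cmod (sf G (u i) (P j)))^2))"
  using frame_HH[OF G u dG pos pr] by (simp add: DD_HH herm_form_frame[OF G])


lemma bl_herm: "bounded_linear (\<lambda>Q. Re (herm_form x Q))"
  unfolding herm_form_def
  by (intro bounded_linear_intros bounded_linear_compose[OF bounded_linear_Re]  bounded_linear_compose[OF bounded_linear_vec_nth bounded_linear_vec_nth])

lemma herm_curve_deriv:
  assumes "\<gamma> differentiable (at 0)"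
  shows "\<exists>c. ((\<lambda>t. Re (herm_form x (\<gamma> t))) has_real_derivative c) (at 0)"
proof -
  obtain D where "(\<gamma> has_derivative D) (at 0)" using assms by (auto simp: differentiable_def)
  then have "((\<lambda>t. Re (herm_form x (\<gamma> t))) has_derivative (\<lambda>h. Re (herm_form x (D h)))) (at 0)"
    by (rule bounded_linear.has_derivative[OF bl_herm])
  then have "(\<lambda>t. Re (herm_form x (\<gamma> t))) differentiable (at 0)" by (rule differentiableI)
  then show ?thesis by (simp add: real_differentiable_def)
qed

lemma HH_herm_pos: "Q \<in> HH \<Longrightarrow> x \<noteq> 0 \<Longrightarrow> Re (herm_form x Q) > 0"
  by (simp add: HH_def pos_def_hermitian_def)

lemma curve_DD_deriv:
  assumes g: "\<forall>t. \<gamma> t \<in> HH" and d: "\<gamma> differentiable (at 0)" and nz: "\<forall>j<m. P j \<noteq> 0"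
  shows "\<exists>l. ((\<lambda>t. DD m P (\<gamma> t)) has_real_derivative l) (at 0)"
proof -
  have "\<forall>j. \<exists>c. ((\<lambda>t. Re (herm_form (P j) (\<gamma> t))) has_real_derivative c) (at 0)"
    using herm_curve_deriv[OF d] by blast
  then obtain c where c: "\<And>j. ((\<lambda>t. Re (herm_form (P j) (\<gamma> t))) has_real_derivative c j) (at 0)"
    by metis
  have f: "(\<lambda>t. DD m P (\<gamma> t)) = (\<lambda>t. \<Sum>j<m. ln (Re (herm_form (P j) (\<gamma> t))))"
    using g by (simp add: DD_HH)
  have "((\<lambda>t. \<Sum>j<m. ln (Re (herm_form (P j) (\<gamma> t)))) has_real_derivative
        (\<Sum>j<m. 1 / Re (herm_form (P j) (\<gamma> 0)) * c j)) (at 0)"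
  proof (rule DERIV_sum)
    fix j assume j: "j \<in> {..<m}"
    have pos: "Re (herm_form (P j) (\<gamma> 0)) > 0" using HH_herm_pos[OF g[rule_format, of 0]] nz j by simp
    show "((\<lambda>t. ln (Re (herm_form (P j) (\<gamma> t)))) has_real_derivative
        1 / Re (herm_form (P j) (\<gamma> 0)) * c j) (at 0)"
      by (rule DERIV_chain2[OF DERIV_ln_divide[OF pos] c])
  qed
  then show ?thesis unfolding f by blast
qed

lemma min_critical:
  assumes Q0: "Q0 \<in> HH" and min: "\<forall>Q\<in>HH. DD m P Q0 \<le> DD m P Q" and nz: "\<forall>j<m. P j \<noteq> 0"
  shows "critical_on_HH m P Q0"
  unfolding critical_on_HH_def
proof (intro conjI allI impI)
  show "Q0 \<in> HH" by fact
  fix \<gamma> :: "real \<Rightarrow> complex^'a^'a"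
  assume h: "(\<forall>t. \<gamma> t \<in> HH) \<and> \<gamma> 0 = Q0 \<and> \<gamma> differentiable at 0"
  obtain l where l: "((\<lambda>t. DD m P (\<gamma> t)) has_real_derivative l) (at 0)"
    using curve_DD_deriv[of \<gamma> m P] h nz by blast
  have "l = 0"
    by (rule DERIV_local_min[OF l, of 1]) (use h min in auto)
  then show "((\<lambda>t. DD m P (\<gamma> t)) has_real_derivative 0) (at 0)" using l by simp
qed

definition coef :: "complex^'n^'n \<Rightarrow> ('n \<Rightarrow> complex^'n) \<Rightarrow> complex^'n \<Rightarrow> 'n \<Rightarrow> real" where
  "coef G u x i = (cmod (sf G (u i) x))^2"

lemma coef_nonneg: "coef G u x i \<ge> 0" by (simp add: coef_def)

lemma coef_pos_ex:
  assumes G: "pos_def_hermitian G" and u: "orthoG G u" and x: "x \<noteq> 0"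
  shows "\<exists>i. coef G u x i > 0"
  using expansion_nz[OF G u x] by (auto simp: coef_def)

lemma wsum_pos:
  assumes G: "pos_def_hermitian G" and u: "orthoG G u" and x: "x \<noteq> 0"
    and pos: "\<And>i. f i > (0::real)"
  shows "(\<Sum>i\<in>UNIV. f i * coef G u x i) > 0"
proof -
  obtain i where i: "coef G u x i > 0" using coef_pos_ex[OF G u x] by blast
  have "0 < f i * coef G u x i" using i pos[of i] by simp
  also have "\<dots> \<le> (\<Sum>i\<in>UNIV. f i * coef G u x i)"
    by (rule member_le_sum) (auto intro: mult_nonneg_nonneg less_imp_le[OF pos] coef_nonneg)
  finally show ?thesis .
qed

lemma geo:
  fixes G :: "complex^'n^'n" and s :: real and \<nu> :: "'n \<Rightarrow> real"
  assumes G: "pos_def_hermitian G" and u: "orthoG G u" and dG: "det G = 1"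
    and s0: "(\<Sum>i\<in>UNIV. \<nu> i) = 0" and nz: "\<forall>j<m. P j \<noteq> 0"
  defines "\<gamma> \<equiv> \<lambda>t. mk (\<lambda>i. G *v u i) (\<lambda>i. exp ((s + t) * \<nu> i))"
  shows "(\<forall>t. \<gamma> t \<in> HH) \<and> \<gamma> differentiable (at 0) \<and>
    ((\<lambda>t. DD m P (\<gamma> t)) has_real_derivative
      (\<Sum>j<m. (\<Sum>i\<in>UNIV. \<nu> i * exp (s * \<nu> i) * coef G u (P j) i) /
               (\<Sum>i\<in>UNIV. exp (s * \<nu> i) * coef G u (P j) i))) (at 0)"
proof (intro conjI)
  have pr: "(\<Prod>i\<in>UNIV. exp ((s + t) * \<nu> i)) = 1" for t
    using s0 by (simp add: exp_sum[symmetric] sum_distrib_left[symmetric])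
  show hh: "\<forall>t. \<gamma> t \<in> HH"
    using frame_HH[OF G u dG _ pr] by (simp add: \<gamma>_def)
  have ed: "((\<lambda>t. exp ((s + t) * \<nu> i)) has_real_derivative exp (s * \<nu> i) * \<nu> i) (at 0)" for i
    by (auto intro!: derivative_eq_intros)
  show "\<gamma> differentiable (at 0)"
    unfolding \<gamma>_def mk_def
    using ed by (intro differentiable_sum ballI differentiable_scaleR differentiable_const)
       (auto simp: real_differentiable_def)
  have f: "(\<lambda>t. DD m P (\<gamma> t)) = (\<lambda>t. \<Sum>j<m. ln (\<Sum>i\<in>UNIV. exp ((s + t) * \<nu> i) * coef G u (P j) i))"
    using DD_frame[OF G u dG _ pr] by (simp add: \<gamma>_def coef_def)
  show "((\<lambda>t. DD m P (\<gamma> t)) has_real_derivative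
      (\<Sum>j<m. (\<Sum>i\<in>UNIV. \<nu> i * exp (s * \<nu> i) * coef G u (P j) i) /
               (\<Sum>i\<in>UNIV. exp (s * \<nu> i) * coef G u (P j) i))) (at 0)"
    unfolding f
  proof (rule DERIV_sum)
    fix j assume j: "j \<in> {..<m}"
    have pos: "(\<Sum>i\<in>UNIV. exp (s * \<nu> i) * coef G u (P j) i) > 0"
      using wsum_pos[OF G u, of "P j"] nz j by simp
    have inner: "((\<lambda>t. \<Sum>i\<in>UNIV. exp ((s + t) * \<nu> i) * coef G u (P j) i) has_real_derivative
        (\<Sum>i\<in>UNIV. \<nu> i * exp (s * \<nu> i) * coef G u (P j) i)) (at 0)"
      by (rule DERIV_sum, rule DERIV_cong[OF DERIV_cmult_right[OF ed]]) (simp add: mult_ac)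
    show "((\<lambda>t. ln (\<Sum>i\<in>UNIV. exp ((s + t) * \<nu> i) * coef G u (P j) i)) has_real_derivative
        (\<Sum>i\<in>UNIV. \<nu> i * exp (s * \<nu> i) * coef G u (P j) i) /
               (\<Sum>i\<in>UNIV. exp (s * \<nu> i) * coef G u (P j) i)) (at 0)"
      using DERIV_chain2[OF DERIV_ln_divide inner] pos by simp
  qed
qed


lemma exp_term_nonneg: "(x - y) * (exp x - exp y) \<ge> (0::real)"
proof (cases "x \<le> y")
  case True
  then have "exp x \<le> exp y" by simp
  then show ?thesis using True by (intro mult_nonpos_nonpos) auto
next
  case False
  then have "exp y \<le> exp x" by simp
  then show ?thesis using False by (intro mult_nonneg_nonneg) auto
qed

lemma exp_term_zero: "(x - y) * (exp x - exp y) = (0::real) \<Longrightarrow> x = y"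
  by (metis eq_iff_diff_eq_0 exp_inj_iff mult_eq_0_iff)

lemma ratio_mono:
  fixes a \<nu> :: "'n::finite \<Rightarrow> real"
  assumes a: "\<And>i. a i \<ge> 0" and A: "(\<Sum>i\<in>UNIV. a i) > 0"
  shows "(\<Sum>i\<in>UNIV. \<nu> i * a i) / (\<Sum>i\<in>UNIV. a i) \<le>
           (\<Sum>i\<in>UNIV. \<nu> i * exp (\<nu> i) * a i) / (\<Sum>i\<in>UNIV. exp (\<nu> i) * a i)"
    and "(\<Sum>i\<in>UNIV. \<nu> i * a i) / (\<Sum>i\<in>UNIV. a i) =
           (\<Sum>i\<in>UNIV. \<nu> i * exp (\<nu> i) * a i) / (\<Sum>i\<in>UNIV. exp (\<nu> i) * a i)
         \<Longrightarrow> a i > 0 \<Longrightarrow> a k > 0 \<Longrightarrow> \<nu> i = \<nu> k"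
proof -
  define SA where "SA = (\<Sum>i\<in>UNIV. a i)"
  define SB where "SB = (\<Sum>i\<in>UNIV. exp (\<nu> i) * a i)"
  define N0 where "N0 = (\<Sum>i\<in>UNIV. \<nu> i * a i)"
  define N1 where "N1 = (\<Sum>i\<in>UNIV. \<nu> i * exp (\<nu> i) * a i)"
  have SAp: "SA > 0" using A by (simp add: SA_def)
  have SBp: "SB > 0"
  proof -
    have "\<exists>i. a i > 0"
    proof (rule ccontr)
      assume "\<not> ?thesis"
      then have "(\<Sum>i\<in>UNIV. a i) \<le> 0" by (intro sum_nonpos) (auto simp: not_less)
      then show False using A by simp
    qed
    then obtain i where "a i > 0" by blast
    then have "0 < exp (\<nu> i) * a i" by simp
    also have "\<dots> \<le> SB" unfolding SB_def by (rule member_le_sum) (simp_all add: a)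
    finally show ?thesis .
  qed
  define t where "t i k = a i * a k * (\<nu> i * (exp (\<nu> i) - exp (\<nu> k)))" for i k
  define X where "X = (\<Sum>i\<in>UNIV. \<Sum>k\<in>UNIV. t i k)"
  have X: "X = N1 * SA - N0 * SB"
  proof -
    have "X = (\<Sum>i\<in>UNIV. \<Sum>k\<in>UNIV. (\<nu> i * exp (\<nu> i) * a i) * a k - (\<nu> i * a i) * (exp (\<nu> k) * a k))"
      unfolding X_def t_def by (intro sum.cong refl) (simp add: algebra_simps)
    also have "\<dots> = (\<Sum>i\<in>UNIV. (\<nu> i * exp (\<nu> i) * a i) * SA - (\<nu> i * a i) * SB)"
      by (simp add: sum_subtractf sum_distrib_left SA_def SB_def)
    also have "\<dots> = N1 * SA - N0 * SB"
      by (simp add: sum_subtractf sum_distrib_right N1_def N0_def)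
    finally show ?thesis .
  qed
  have Y: "2 * X = (\<Sum>i\<in>UNIV. \<Sum>k\<in>UNIV. a i * a k * ((\<nu> i - \<nu> k) * (exp (\<nu> i) - exp (\<nu> k))))"
  proof -
    have sw: "X = (\<Sum>i\<in>UNIV. \<Sum>k\<in>UNIV. t k i)" unfolding X_def by (rule sum.swap)
    have "2 * X = X + X" by simp
    also have "\<dots> = (\<Sum>i\<in>UNIV. \<Sum>k\<in>UNIV. t i k) + (\<Sum>i\<in>UNIV. \<Sum>k\<in>UNIV. t k i)"
      by (rule arg_cong2[where f="(+)"]) (simp add: X_def, rule sw)
    also have "\<dots> = (\<Sum>i\<in>UNIV. \<Sum>k\<in>UNIV. t i k + t k i)" by (simp add: sum.distrib)
    also have "\<dots> = (\<Sum>i\<in>UNIV. \<Sum>k\<in>UNIV. a i * a k * ((\<nu> i - \<nu> k) * (exp (\<nu> i) - exp (\<nu> k))))"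
      by (intro sum.cong refl) (simp add: t_def algebra_simps)
    finally show ?thesis .
  qed
  have terms: "a i * a k * ((\<nu> i - \<nu> k) * (exp (\<nu> i) - exp (\<nu> k))) \<ge> 0" for i k
    by (rule mult_nonneg_nonneg[OF mult_nonneg_nonneg[OF a a] exp_term_nonneg])
  have "0 \<le> (\<Sum>i\<in>UNIV. \<Sum>k\<in>UNIV. a i * a k * ((\<nu> i - \<nu> k) * (exp (\<nu> i) - exp (\<nu> k))))"
    by (intro sum_nonneg terms)
  then have Xnn: "X \<ge> 0" using Y by linarith
  have diff: "N1 / SB - N0 / SA = X / (SA * SB)"
    using SAp SBp by (simp add: X field_simps)
  show "(\<Sum>i\<in>UNIV. \<nu> i * a i) / (\<Sum>i\<in>UNIV. a i) \<le>
           (\<Sum>i\<in>UNIV. \<nu> i * exp (\<nu> i) * a i) / (\<Sum>i\<in>UNIV. exp (\<nu> i) * a i)"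
  proof -
    have "X / (SA * SB) \<ge> 0" using Xnn SAp SBp by simp
    then have "N0 / SA \<le> N1 / SB" using diff by linarith
    then show ?thesis unfolding N0_def N1_def SA_def SB_def .
  qed
  assume eq: "(\<Sum>i\<in>UNIV. \<nu> i * a i) / (\<Sum>i\<in>UNIV. a i) =
           (\<Sum>i\<in>UNIV. \<nu> i * exp (\<nu> i) * a i) / (\<Sum>i\<in>UNIV. exp (\<nu> i) * a i)"
    and ai: "a i > 0" and ak: "a k > 0"
  have "X / (SA * SB) = 0" using diff eq unfolding N0_def N1_def SA_def SB_def by simp
  then have "X = 0" using SAp SBp by simp
  then have "(\<Sum>i\<in>UNIV. \<Sum>k\<in>UNIV. a i * a k * ((\<nu> i - \<nu> k) * (exp (\<nu> i) - exp (\<nu> k)))) = 0"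
    using Y by simp
  then have "\<forall>i\<in>UNIV. (\<Sum>k\<in>UNIV. a i * a k * ((\<nu> i - \<nu> k) * (exp (\<nu> i) - exp (\<nu> k)))) = 0"
    by (subst (asm) sum_nonneg_eq_0_iff) (auto intro: sum_nonneg terms)
  then have "a i * a k * ((\<nu> i - \<nu> k) * (exp (\<nu> i) - exp (\<nu> k))) = 0"
    using sum_nonneg_eq_0_iff[of UNIV "\<lambda>k. a i * a k * ((\<nu> i - \<nu> k) * (exp (\<nu> i) - exp (\<nu> k)))"] terms
    by auto
  then show "\<nu> i = \<nu> k" using ai ak by (auto dest: exp_term_zero)
qed


lemma span_support:
  assumes G: "pos_def_hermitian G" and u: "orthoG G u"
    and z: "\<And>i. i \<notin> S \<Longrightarrow> sf G (u i) x = 0"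
  shows "x \<in> vec.span (u ` S)"
proof -
  have "x = (\<Sum>i\<in>UNIV. sf G (u i) x *s u i)" by (rule expansion[OF G u])
  also have "\<dots> = (\<Sum>i\<in>S. sf G (u i) x *s u i)"
    by (rule sum.mono_neutral_right) (auto simp: z)
  also have "\<dots> \<in> vec.span (u ` S)"
    by (intro vec.span_sum vec.span_scale vec.span_base) auto
  finally show ?thesis .
qed

lemma span_support_conv:
  assumes x: "x \<in> vec.span (u ` S)" and u: "orthoG G u" and i: "i \<notin> S"
  shows "sf G (u i) x = 0"
proof -
  have "subspace_ok": "vec.subspace (Collect (\<lambda>y. sf G (u i) y = 0))"
    by (rule vec.subspaceI) (auto simp: sf_add_right sf_smult_right)
  have gen: "\<And>y. y \<in> u ` S \<Longrightarrow> sf G (u i) y = 0"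
  proof -
    fix y assume "y \<in> u ` S"
    then obtain k where "y = u k" "k \<in> S" by blast
    then show "sf G (u i) y = 0" using u i by (auto simp: orthoG_def)
  qed
  show ?thesis using vec.span_induct[OF x subspace_ok gen] by simp
qed

lemma indep_range:
  assumes G: "pos_def_hermitian G" and u: "orthoG G u"
  shows "vec.independent (range u)"
proof (rule orth_indep[OF G])
  fix v assume "v \<in> range u"
  then obtain i where "v = u i" by blast
  then show "sf G v v \<noteq> 0" using u by (simp add: orthoG_def)
next
  fix v w assume "v \<in> range u" "w \<in> range u" "v \<noteq> w"
  then obtain i k where "v = u i" "w = u k" "i \<noteq> k" by blast
  then show "sf G v w = 0" using u by (simp add: orthoG_def)
qed

lemma dim_span_u:
  assumes G: "pos_def_hermitian G" and u: "orthoG G u"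
  shows "vec.dim (vec.span (u ` S)) = card S"
proof -
  have "vec.independent (u ` S)"
    by (rule vec.independent_mono[OF indep_range[OF G u]]) auto
  then have "vec.dim (vec.span (u ` S)) = card (u ` S)" by (rule vec.dim_span_eq_card_independent)
  also have "\<dots> = card S" using orthoG_inj[OF u] by (simp add: card_image inj_on_subset)
  finally show ?thesis .
qed

lemma u_nz: "orthoG G u \<Longrightarrow> u i \<noteq> 0"
proof
  assume a: "orthoG G u" "u i = 0"
  have "sf G (u i) (u i) = 1" using a(1) by (simp add: orthoG_def)
  then show False using a(2) by simp
qed

lemma span_proper:
  fixes u :: "'n \<Rightarrow> complex^'n"
  assumes G: "pos_def_hermitian G" and u: "orthoG G u" and i0: "i0 \<in> S" and i1: "i1 \<notin> S"
  shows "vec.subspace (vec.span (u ` S)) \<and> vec.span (u ` S) \<noteq> {0} \<and> vec.span (u ` S) \<noteq> UNIV"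
proof (intro conjI)
  show "vec.subspace (vec.span (u ` S))" by (rule vec.subspace_span)
  show "vec.span (u ` S) \<noteq> {0}"
    using vec.span_base[of "u i0" "u ` S"] i0 u_nz[OF u, of i0] by auto
  show "vec.span (u ` S) \<noteq> UNIV"
  proof
    assume "vec.span (u ` S) = UNIV"
    then have "card S = CARD('n)" using dim_span_u[OF G u, of S] vec_dim_card[where 'a=complex and 'n='n]
      by simp
    moreover have "card S < CARD('n)" using i1 by (intro psubset_card_mono) auto
    ultimately show False by simp
  qed
qed

lemma crit_unique:
  fixes P :: "nat \<Rightarrow> complex^'n"
  assumes nz: "\<forall>j<m. P j \<noteq> 0" and stable: "stable_cluster m P"
    and c1: "critical_on_HH m P Q1" and c2: "critical_on_HH m P Q2"
  shows "Q1 = Q2"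
proof -
  have Q1: "Q1 \<in> HH" and Q2: "Q2 \<in> HH" using c1 c2 by (auto simp: critical_on_HH_def)
  have G: "pos_def_hermitian Q1" and dG: "det Q1 = 1" using Q1 by (auto simp: HH_def)
  obtain u \<mu> where u: "orthoG Q1 u" and pos: "\<And>i. \<mu> i > 0" and pr: "(\<Prod>i\<in>UNIV. \<mu> i) = 1"
    and Q2eq: "Q2 = mk (\<lambda>i. Q1 *v u i) \<mu>"
    using HH_decomp[OF G dG Q2] by blast
  define \<nu> where "\<nu> i = ln (\<mu> i)" for i
  have mu_exp: "\<mu> i = exp (\<nu> i)" for i using pos[of i] by (simp add: \<nu>_def)
  have s0: "(\<Sum>i\<in>UNIV. \<nu> i) = 0"
  proof -
    have nz': "\<mu> i \<noteq> 0" for i using pos[of i] by simp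
    have "ln (\<Prod>i\<in>UNIV. \<mu> i) = (\<Sum>i\<in>UNIV. ln (\<mu> i))"
      by (rule ln_prod) (simp_all add: nz')
    then show ?thesis using pr by (simp add: \<nu>_def)
  qed
  define a where "a j i = coef Q1 u (P j) i" for j i
  define R where "R s j = (\<Sum>i\<in>UNIV. \<nu> i * exp (s * \<nu> i) * a j i) / (\<Sum>i\<in>UNIV. exp (s * \<nu> i) * a j i)" for s j
  have derivs: "(\<Sum>j<m. R s j) = 0" if s: "s = 0 \<or> s = 1" for s :: real
  proof -
    define \<gamma> where "\<gamma> = (\<lambda>t. mk (\<lambda>i. Q1 *v u i) (\<lambda>i. exp ((s + t) * \<nu> i)))"
    have g: "(\<forall>t. \<gamma> t \<in> HH) \<and> \<gamma> differentiable (at 0) \<and>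
      ((\<lambda>t. DD m P (\<gamma> t)) has_real_derivative (\<Sum>j<m. R s j)) (at 0)"
      using geo[OF G u dG s0 nz, of s] by (simp add: \<gamma>_def R_def a_def)
    have g0: "\<gamma> 0 = (if s = 0 then Q1 else Q2)"
      using s mk_one_frame[OF G u] by (auto simp: \<gamma>_def Q2eq mu_exp[symmetric])
    have crit: "critical_on_HH m P (\<gamma> 0)" using c1 c2 g0 by (cases "s = 0") simp_all
    have "((\<lambda>t. DD m P (\<gamma> t)) has_real_derivative 0) (at 0)"
      using crit[unfolded critical_on_HH_def, THEN conjunct2, rule_format, of \<gamma>] g by simp
    then show ?thesis using g DERIV_unique by metis
  qed
  have apos: "(\<Sum>i\<in>UNIV. a j i) > 0" if j: "j < m" for j
    using wsum_pos[OF G u, of "P j" "\<lambda>_. 1"] nz j by (simp add: a_def)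
  have anonneg: "\<And>i. a j i \<ge> 0" for j by (simp add: a_def coef_nonneg)
  have R0: "R 0 j = (\<Sum>i\<in>UNIV. \<nu> i * a j i) / (\<Sum>i\<in>UNIV. a j i)" for j by (simp add: R_def)
  have R1: "R 1 j = (\<Sum>i\<in>UNIV. \<nu> i * exp (\<nu> i) * a j i) / (\<Sum>i\<in>UNIV. exp (\<nu> i) * a j i)" for j
    by (simp add: R_def)
  have Rmono: "R 0 j \<le> R 1 j" if j: "j < m" for j
    unfolding R0 R1 by (rule ratio_mono(1)[OF anonneg apos[OF j]])
  have Req: "R 0 j = R 1 j" if j: "j < m" for j
  proof -
    have "(\<Sum>j<m. R 1 j - R 0 j) = 0" using derivs[of 0] derivs[of 1] by (simp add: sum_subtractf)
    then have "\<forall>j\<in>{..<m}. R 1 j - R 0 j = 0"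
      by (subst (asm) sum_nonneg_eq_0_iff) (use Rmono in auto)
    then show ?thesis using j by auto
  qed
  have const_supp: "\<nu> i = \<nu> k" if j: "j < m" and "a j i > 0" "a j k > 0" for j i k
    using ratio_mono(2)[OF anonneg apos[OF j], of \<nu> i k] Req[OF j] that unfolding R0 R1 by blast
  have azero: "a j i = 0 \<longleftrightarrow> sf Q1 (u i) (P j) = 0" for j i by (simp add: a_def coef_def)
  have const: "\<nu> i = \<nu> k" for i k
  proof (rule ccontr)
    assume ne: "\<nu> i \<noteq> \<nu> k"
    define T where "T = {l. \<nu> l = \<nu> i}"
    define E1 where "E1 = vec.span (u ` T)"
    define E2 where "E2 = vec.span (u ` (- T))"
    have iT: "i \<in> T" and kT: "k \<notin> T" using ne by (auto simp: T_def)
    have p1: "vec.subspace E1 \<and> E1 \<noteq> {0} \<and> E1 \<noteq> UNIV"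
      unfolding E1_def by (rule span_proper[OF G u iT kT])
    have p2: "vec.subspace E2 \<and> E2 \<noteq> {0} \<and> E2 \<noteq> UNIV"
      unfolding E2_def by (rule span_proper[OF G u]) (use iT kT in auto)
    have d1: "vec.dim E1 = card T" unfolding E1_def by (rule dim_span_u[OF G u])
    have d2: "vec.dim E2 = card (- T)" unfolding E2_def by (rule dim_span_u[OF G u])
    have dsum: "vec.dim E1 + vec.dim E2 = CARD('n)"
    proof -
      have "card (T \<union> - T) = card T + card (- T)" by (rule card_Un_disjoint) auto
      then show ?thesis using d1 d2 by simp
    qed
    define A1 where "A1 = {j. j < m \<and> P j \<in> E1}"
    define A2 where "A2 = {j. j < m \<and> P j \<in> E2}"
    have cover: "{..<m} \<subseteq> A1 \<union> A2"
    proof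
      fix j assume "j \<in> {..<m}"
      then have j: "j < m" by simp
      obtain l where l: "a j l > 0" using coef_pos_ex[OF G u, of "P j"] nz j by (auto simp: a_def)
      show "j \<in> A1 \<union> A2"
      proof (cases "\<nu> l = \<nu> i")
        case True
        have "P j \<in> E1" unfolding E1_def
        proof (rule span_support[OF G u])
          fix i' assume "i' \<notin> T"
          show "sf Q1 (u i') (P j) = 0"
          proof (rule ccontr)
            assume "sf Q1 (u i') (P j) \<noteq> 0"
            then have "a j i' > 0" using azero[of j i'] coef_nonneg[of Q1 u "P j" i'] by (simp add: a_def)
            then have "\<nu> l = \<nu> i'" using const_supp[OF j l] by simp
            then show False using True \<open>i' \<notin> T\<close> by (simp add: T_def)
          qed
        qed
        then show ?thesis using j by (simp add: A1_def)
      next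
        case False
        have "P j \<in> E2" unfolding E2_def
        proof (rule span_support[OF G u])
          fix i' assume "i' \<notin> - T"
          show "sf Q1 (u i') (P j) = 0"
          proof (rule ccontr)
            assume "sf Q1 (u i') (P j) \<noteq> 0"
            then have "a j i' > 0" using azero[of j i'] coef_nonneg[of Q1 u "P j" i'] by (simp add: a_def)
            then have "\<nu> l = \<nu> i'" using const_supp[OF j l] by simp
            then show False using False \<open>i' \<notin> - T\<close> by (simp add: T_def)
          qed
        qed
        then show ?thesis using j by (simp add: A2_def)
      qed
    qed
    have "m \<le> card (A1 \<union> A2)"
      using card_mono[OF _ cover] by (simp add: A1_def A2_def)
    also have "\<dots> \<le> card A1 + card A2" by (rule card_Un_le)
    finally have mle: "m \<le> card A1 + card A2" .
    have s1: "CARD('n) * card A1 < vec.dim E1 * m"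
      using stable p1 unfolding stable_cluster_def A1_def by blast
    have s2: "CARD('n) * card A2 < vec.dim E2 * m"
      using stable p2 unfolding stable_cluster_def A2_def by blast
    have "CARD('n) * (card A1 + card A2) < (vec.dim E1 + vec.dim E2) * m"
      using s1 s2 by (simp add: add_mult_distrib add_mult_distrib2)
    also have "\<dots> = CARD('n) * m" using dsum by simp
    also have "\<dots> \<le> CARD('n) * (card A1 + card A2)" using mle by simp
    finally show False by simp
  qed
  have nu0: "\<nu> i = 0" for i
  proof -
    obtain c0 where c: "\<And>k. \<nu> k = c0" using const by blast
    have "(\<Sum>k\<in>UNIV. \<nu> k) = real CARD('n) * c0" by (simp add: c)
    then show ?thesis using s0 c[of i] by simp
  qed
  have "\<mu> = (\<lambda>_. 1)" using mu_exp nu0 by auto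
  then show ?thesis using Q2eq mk_one_frame[OF G u] by simp
qed


definition supp :: "complex^'n^'n \<Rightarrow> ('n \<Rightarrow> complex^'n) \<Rightarrow> complex^'n \<Rightarrow> 'n set" where
  "supp G u x = {i. sf G (u i) x \<noteq> 0}"

definition psi :: "complex^'n^'n \<Rightarrow> ('n \<Rightarrow> complex^'n) \<Rightarrow> (nat \<Rightarrow> complex^'n) \<Rightarrow> nat \<Rightarrow> ('n \<Rightarrow> real) \<Rightarrow> real" where
  "psi G u P m \<nu> = (\<Sum>j<m. Max (\<nu> ` supp G u (P j))) - real m / real CARD('n) * (\<Sum>i\<in>UNIV. \<nu> i)"

definition kappa :: "complex^'n^'n \<Rightarrow> ('n \<Rightarrow> complex^'n) \<Rightarrow> (nat \<Rightarrow> complex^'n) \<Rightarrow> nat \<Rightarrow> 'n set \<Rightarrow> real" where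
  "kappa G u P m T = real m * real (card (- T)) / real CARD('n)
      - real (card {j. j < m \<and> P j \<in> vec.span (u ` (- T))})"

definition delta :: "complex^'n^'n \<Rightarrow> ('n \<Rightarrow> complex^'n) \<Rightarrow> (nat \<Rightarrow> complex^'n) \<Rightarrow> nat \<Rightarrow> real" where
  "delta G u P m = Min (insert 1 (kappa G u P m ` {T. T \<noteq> {} \<and> T \<noteq> UNIV}))"

lemma supp_ne:
  assumes G: "pos_def_hermitian G" and u: "orthoG G u" and x: "x \<noteq> 0"
  shows "supp G u x \<noteq> {}"
  using expansion_nz[OF G u x] by (auto simp: supp_def)

lemma kappa_pos:
  fixes P :: "nat \<Rightarrow> complex^'n"
  assumes G: "pos_def_hermitian G" and u: "orthoG G u" and stable: "stable_cluster m P"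
    and T: "T \<noteq> {}" "T \<noteq> UNIV"
  shows "kappa G u P m T > 0"
proof -
  obtain i0 where i0: "i0 \<in> - T" using T(2) by blast
  obtain i1 where i1: "i1 \<in> T" using T(1) by blast
  have p: "vec.subspace (vec.span (u ` (- T))) \<and> vec.span (u ` (- T)) \<noteq> {0} \<and> vec.span (u ` (- T)) \<noteq> UNIV"
    by (rule span_proper[OF G u i0]) (use i1 in auto)
  have "CARD('n) * card {j. j < m \<and> P j \<in> vec.span (u ` (- T))} < vec.dim (vec.span (u ` (- T))) * m"
    using stable p unfolding stable_cluster_def by blast
  then have "CARD('n) * card {j. j < m \<and> P j \<in> vec.span (u ` (- T))} < card (- T) * m"
    unfolding dim_span_u[OF G u] .
  then have "real CARD('n) * real (card {j. j < m \<and> P j \<in> vec.span (u ` (- T))}) < real (card (- T)) * real m"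
    by (simp only: of_nat_mult[symmetric] of_nat_less_iff)
  then show ?thesis
    by (simp add: kappa_def field_simps)
qed

lemma delta_pos:
  fixes P :: "nat \<Rightarrow> complex^'n"
  assumes G: "pos_def_hermitian G" and u: "orthoG G u" and stable: "stable_cluster m P"
  shows "delta G u P m > 0" and "\<And>T. T \<noteq> {} \<Longrightarrow> T \<noteq> UNIV \<Longrightarrow> delta G u P m \<le> kappa G u P m T"
proof -
  have fin: "finite (insert 1 (kappa G u P m ` {T. T \<noteq> {} \<and> T \<noteq> UNIV}))" by simp
  show "delta G u P m > 0"
    unfolding delta_def using kappa_pos[OF G u stable] fin
    by (subst Min_gr_iff) auto
  fix T :: "'n set" assume "T \<noteq> {}" "T \<noteq> UNIV"
  then show "delta G u P m \<le> kappa G u P m T"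
    unfolding delta_def using fin by (intro Min_le) auto
qed

lemma supp_T_iff:
  assumes G: "pos_def_hermitian G" and u: "orthoG G u"
  shows "supp G u x \<inter> T = {} \<longleftrightarrow> x \<in> vec.span (u ` (- T))"
proof
  assume h: "supp G u x \<inter> T = {}"
  show "x \<in> vec.span (u ` (- T))"
    by (rule span_support[OF G u]) (use h in \<open>auto simp: supp_def\<close>)
next
  assume h: "x \<in> vec.span (u ` (- T))"
  have "sf G (u i) x = 0" if "i \<in> T" for i
    by (rule span_support_conv[OF h u]) (use that in auto)
  then show "supp G u x \<inter> T = {}" by (auto simp: supp_def)
qed


lemma psi_bound:
  fixes P :: "nat \<Rightarrow> complex^'n"
  assumes G: "pos_def_hermitian G" and u: "orthoG G u" and stable: "stable_cluster m P"
    and nz: "\<forall>j<m. P j \<noteq> 0"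
  shows "psi G u P m \<nu> \<ge> delta G u P m * (Max (range \<nu>) - Min (range \<nu>))"
proof (induction "card (range \<nu>)" arbitrary: \<nu> rule: less_induct)
  case less
  define N where "N = real CARD('n)"
  have Npos: "N > 0" by (simp add: N_def)
  have dpos: "delta G u P m > 0" using delta_pos(1)[OF G u stable] .
  have sne: "supp G u (P j) \<noteq> {}" if "j < m" for j using supp_ne[OF G u] nz that by auto
  show ?case
  proof (cases "\<forall>i k. \<nu> i = \<nu> k")
    case True
    obtain c where c: "\<And>i. \<nu> i = c" using True by blast
    have r: "range \<nu> = {c}" using c by auto
    have "(\<Sum>j<m. Max (\<nu> ` supp G u (P j))) = (\<Sum>j<m. c)"
    proof (rule sum.cong)
      fix j assume "j \<in> {..<m}"
      then have "\<nu> ` supp G u (P j) = {c}" using sne[of j] c by auto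
      then show "Max (\<nu> ` supp G u (P j)) = c" by simp
    qed simp
    then have "psi G u P m \<nu> = 0" using Npos by (simp add: psi_def c N_def)
    then show ?thesis using r by simp
  next
    case False
    define R where "R = range \<nu>"
    have finR: "finite R" by (simp add: R_def)
    define vmax where "vmax = Max R"
    define T where "T = {i. \<nu> i = vmax}"
    define R' where "R' = R - {vmax}"
    obtain i1 k1 where ik: "\<nu> i1 \<noteq> \<nu> k1" using False by blast
    have vmax_in: "vmax \<in> R" using finR by (simp add: vmax_def R_def)
    have le_vmax: "\<nu> i \<le> vmax" for i using finR by (simp add: vmax_def R_def)
    have R'ne: "R' \<noteq> {}"
    proof -
      have "\<nu> i1 \<noteq> vmax \<or> \<nu> k1 \<noteq> vmax" using ik by auto
      then show ?thesis by (auto simp: R'_def R_def)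
    qed
    have finR': "finite R'" using finR by (simp add: R'_def)
    define v2 where "v2 = Max R'"
    have v2_in: "v2 \<in> R'" using finR' R'ne by (simp add: v2_def)
    have v2_lt: "v2 < vmax" using v2_in le_vmax by (auto simp: R'_def R_def le_less)
    have le_v2: "\<nu> i \<le> v2" if "\<nu> i \<noteq> vmax" for i
      using that finR' by (auto simp: v2_def R'_def R_def intro!: Max_ge)
    obtain i2 where i2: "\<nu> i2 = v2" using v2_in by (auto simp: R'_def R_def)
    define \<nu>' where "\<nu>' i = (if \<nu> i = vmax then v2 else \<nu> i)" for i
    have range': "range \<nu>' = R'"
    proof
      show "range \<nu>' \<subseteq> R'" using v2_in by (auto simp: \<nu>'_def R'_def R_def)
      show "R' \<subseteq> range \<nu>'"
      proof
        fix v assume "v \<in> R'"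
        then obtain i where "\<nu> i = v" "v \<noteq> vmax" by (auto simp: R'_def R_def)
        then have "\<nu>' i = v" by (simp add: \<nu>'_def)
        then show "v \<in> range \<nu>'" by blast
      qed
    qed
    have card_less: "card (range \<nu>') < card (range \<nu>)"
      unfolding range' R'_def R_def[symmetric] using finR vmax_in by (rule card_Diff1_less)
    have IH: "psi G u P m \<nu>' \<ge> delta G u P m * (Max (range \<nu>') - Min (range \<nu>'))"
      by (rule less.hyps[OF card_less])
    have Tne: "T \<noteq> {}" using vmax_in by (auto simp: T_def R_def)
    have TnU: "T \<noteq> UNIV" using i2 v2_lt by (auto simp: T_def)
    define E where "E = vec.span (u ` (- T))"
    define cnt where "cnt = card {j. j < m \<and> P j \<in> E}"
    have kap: "kappa G u P m T = real m * real (card (- T)) / N - real cnt"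
      by (simp add: kappa_def N_def cnt_def E_def)
    have cardT: "real (card (- T)) = N - real (card T)"
    proof -
      have "card (T \<union> - T) = card T + card (- T)" by (rule card_Un_disjoint) auto
      then show ?thesis by (simp add: N_def)
    qed
    have sumdiff: "(\<Sum>i\<in>UNIV. \<nu> i) - (\<Sum>i\<in>UNIV. \<nu>' i) = real (card T) * (vmax - v2)"
    proof -
      have "(\<Sum>i\<in>UNIV. \<nu> i) - (\<Sum>i\<in>UNIV. \<nu>' i) = (\<Sum>i\<in>UNIV. if i \<in> T then vmax - v2 else 0)"
        unfolding sum_subtractf[symmetric] by (intro sum.cong) (auto simp: \<nu>'_def T_def)
      also have "\<dots> = (\<Sum>i\<in>T. vmax - v2)" by (simp add: sum.If_cases)
      finally show ?thesis by simp
    qed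
    have maxdiff: "Max (\<nu> ` supp G u (P j)) - Max (\<nu>' ` supp G u (P j))
        = (if supp G u (P j) \<inter> T \<noteq> {} then vmax - v2 else 0)" if j: "j < m" for j
    proof (cases "supp G u (P j) \<inter> T \<noteq> {}")
      case True
      then obtain i where i: "i \<in> supp G u (P j)" "\<nu> i = vmax" by (auto simp: T_def)
      have fin: "finite (supp G u (P j))" by simp
      have m1: "Max (\<nu> ` supp G u (P j)) = vmax"
        by (rule Max_eqI) (use fin i le_vmax in auto)
      have m2: "Max (\<nu>' ` supp G u (P j)) = v2"
      proof (rule Max_eqI)
        show "finite (\<nu>' ` supp G u (P j))" using fin by simp
        show "v2 \<in> \<nu>' ` supp G u (P j)" using i by (force simp: \<nu>'_def)
        fix y assume "y \<in> \<nu>' ` supp G u (P j)"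
        then show "y \<le> v2" using le_v2 by (auto simp: \<nu>'_def)
      qed
      show ?thesis using True m1 m2 by simp
    next
      case False
      have "\<nu>' ` supp G u (P j) = \<nu> ` supp G u (P j)"
        using False by (auto simp: \<nu>'_def T_def intro!: image_cong)
      then show ?thesis using False by simp
    qed
    have disj: "supp G u (P j) \<inter> T \<noteq> {} \<longleftrightarrow> P j \<notin> E" for j
      using supp_T_iff[OF G u, of "P j" T] by (simp add: E_def)
    have phidiff: "(\<Sum>j<m. Max (\<nu> ` supp G u (P j))) - (\<Sum>j<m. Max (\<nu>' ` supp G u (P j)))
        = (vmax - v2) * (real m - real cnt)"
    proof -
      have "(\<Sum>j<m. Max (\<nu> ` supp G u (P j))) - (\<Sum>j<m. Max (\<nu>' ` supp G u (P j)))
          = (\<Sum>j<m. if P j \<notin> E then vmax - v2 else 0)"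
        by (simp add: sum_subtractf[symmetric] maxdiff disj)
      also have "\<dots> = (\<Sum>j\<in>{j\<in>{..<m}. P j \<notin> E}. vmax - v2)"
        by (rule sum.inter_filter[symmetric]) simp
      also have "\<dots> = real (card {j\<in>{..<m}. P j \<notin> E}) * (vmax - v2)" by simp
      also have "card {j\<in>{..<m}. P j \<notin> E} = m - cnt"
      proof -
        have "{j\<in>{..<m}. P j \<notin> E} = {..<m} - {j. j < m \<and> P j \<in> E}" by auto
        moreover have "card ({..<m} - {j. j < m \<and> P j \<in> E}) = card {..<m} - card {j. j < m \<and> P j \<in> E}"
          by (rule card_Diff_subset) auto
        ultimately show ?thesis by (simp add: cnt_def)
      qed
      also have "real (m - cnt) = real m - real cnt"
      proof -
        have "cnt \<le> m" unfolding cnt_def by (rule order_trans[OF card_mono[of "{..<m}"]]) auto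
        then show ?thesis by simp
      qed
      finally show ?thesis by (simp add: mult.commute)
    qed
    have psidiff: "psi G u P m \<nu> - psi G u P m \<nu>' = (vmax - v2) * kappa G u P m T"
    proof -
      have "psi G u P m \<nu> - psi G u P m \<nu>' = (vmax - v2) * (real m - real cnt)
          - real m / N * ((\<Sum>i\<in>UNIV. \<nu> i) - (\<Sum>i\<in>UNIV. \<nu>' i))"
        using phidiff by (simp add: psi_def N_def algebra_simps)
      also have "\<dots> = (vmax - v2) * (real m - real cnt) - real m / N * (real (card T) * (vmax - v2))"
        by (simp add: sumdiff)
      also have "\<dots> = (vmax - v2) * kappa G u P m T"
        using Npos by (simp add: kap cardT field_simps)
      finally show ?thesis .
    qed
    have kd: "delta G u P m \<le> kappa G u P m T" by (rule delta_pos(2)[OF G u stable Tne TnU])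
    have maxr': "Max (range \<nu>') = v2" by (simp add: range' v2_def)
    have minr: "Min (range \<nu>') = Min (range \<nu>)"
    proof -
      have mR: "Min R \<in> R" using finR by (simp add: R_def)
      have "Min R \<noteq> vmax"
      proof
        assume "Min R = vmax"
        then have "\<nu> i = vmax" for i using le_vmax[of i] finR by (metis Min_le R_def rangeI order_antisym)
        then show False using ik by metis
      qed
      then have "Min R \<in> R'" using mR by (simp add: R'_def)
      then have "Min R' = Min R"
        using finR' by (intro Min_eqI) (auto simp: R'_def intro: Min_le finR)
      then show ?thesis by (simp add: range' R_def)
    qed
    have "delta G u P m * (vmax - v2) \<le> (vmax - v2) * kappa G u P m T"
      using kd v2_lt by (simp add: mult.commute mult_left_mono)
    then have "psi G u P m \<nu> \<ge> delta G u P m * (v2 - Min (range \<nu>)) + delta G u P m * (vmax - v2)"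
    proof -
      have IH': "delta G u P m * (v2 - Min (range \<nu>)) \<le> psi G u P m \<nu>'"
        using IH maxr' minr by simp
      show ?thesis using IH' psidiff \<open>delta G u P m * (vmax - v2) \<le> (vmax - v2) * kappa G u P m T\<close>
        by linarith
    qed
    moreover have "Max (range \<nu>) = vmax" by (simp add: vmax_def R_def)
    ultimately show ?thesis by (simp add: algebra_simps)
  qed
qed


abbreviation "I1 \<equiv> mat 1"

lemma norm_vec_le_sum: "norm (x :: 'a::real_normed_vector^'n) \<le> (\<Sum>i\<in>UNIV. norm (x $ i))"
  unfolding norm_vec_def by (rule L2_set_le_sum) simp

lemma norm_u: "orthoG I1 u \<Longrightarrow> norm (u i) = 1"
proof -
  assume u: "orthoG I1 u"
  have "ip (u i) (u i) = 1" using u by (simp add: orthoG_def sf_id)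
  then have "complex_of_real ((norm (u i))^2) = 1" by (simp add: ip_self_norm)
  then have "(norm (u i))^2 = 1" by (metis of_real_eq_1_iff)
  then show ?thesis using norm_ge_zero[of "u i"] by (auto simp: power2_eq_1_iff)
qed

definition FF :: "(nat \<Rightarrow> complex^'n) \<Rightarrow> nat \<Rightarrow> ('n \<Rightarrow> complex^'n) \<Rightarrow> ('n \<Rightarrow> real) \<Rightarrow> real" where
  "FF P m u \<nu> = (\<Sum>j<m. ln (\<Sum>i\<in>UNIV. exp (\<nu> i) * coef I1 u (P j) i))"

lemma DD_FF:
  assumes u: "orthoG I1 u" and s0: "(\<Sum>i\<in>UNIV. \<nu> i) = 0"
  shows "DD m P (mk u (\<lambda>i. exp (\<nu> i))) = FF P m u \<nu>"
    and "mk u (\<lambda>i. exp (\<nu> i)) \<in> HH"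
proof -
  have pr: "(\<Prod>i\<in>UNIV. exp (\<nu> i)) = 1" using s0 by (simp add: exp_sum[symmetric])
  have e: "(\<lambda>i. I1 *v u i) = u" by simp
  show "DD m P (mk u (\<lambda>i. exp (\<nu> i))) = FF P m u \<nu>"
    using DD_frame[OF pdh_id u _ _ pr, of m P] by (simp add: FF_def coef_def)
  show "mk u (\<lambda>i. exp (\<nu> i)) \<in> HH"
    using frame_HH[OF pdh_id u _ _ pr] by simp
qed

lemma lower_near:
  fixes P :: "nat \<Rightarrow> complex^'n"
  assumes uL: "orthoG I1 uL" and nz: "\<forall>j<m. P j \<noteq> 0" and b: "\<beta> > 0"
    and near: "\<forall>j<m. \<forall>i\<in>supp I1 uL (P j). coef I1 u (P j) i \<ge> \<beta>"
  shows "FF P m u \<nu> \<ge> (\<Sum>j<m. Max (\<nu> ` supp I1 uL (P j))) + real m * ln \<beta>"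
proof -
  have "ln (\<Sum>i\<in>UNIV. exp (\<nu> i) * coef I1 u (P j) i) \<ge> Max (\<nu> ` supp I1 uL (P j)) + ln \<beta>"
    if j: "j < m" for j
  proof -
    have ne: "supp I1 uL (P j) \<noteq> {}" using supp_ne[OF pdh_id uL] nz j by auto
    have "Max (\<nu> ` supp I1 uL (P j)) \<in> \<nu> ` supp I1 uL (P j)"
      by (rule Max_in) (use ne in auto)
    then obtain i where i: "i \<in> supp I1 uL (P j)" "\<nu> i = Max (\<nu> ` supp I1 uL (P j))"
      by (metis imageE)
    have ci: "coef I1 u (P j) i \<ge> \<beta>" using near j i by auto
    have "exp (\<nu> i) * \<beta> \<le> exp (\<nu> i) * coef I1 u (P j) i" using ci by simp
    also have "\<dots> \<le> (\<Sum>i\<in>UNIV. exp (\<nu> i) * coef I1 u (P j) i)"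
      by (rule member_le_sum) (auto intro!: mult_nonneg_nonneg coef_nonneg)
    finally have le: "exp (\<nu> i) * \<beta> \<le> (\<Sum>i\<in>UNIV. exp (\<nu> i) * coef I1 u (P j) i)" .
    have "ln (exp (\<nu> i) * \<beta>) \<le> ln (\<Sum>i\<in>UNIV. exp (\<nu> i) * coef I1 u (P j) i)"
    proof -
      have p1: "0 < exp (\<nu> i) * \<beta>" using b by simp
      then have p2: "0 < (\<Sum>i\<in>UNIV. exp (\<nu> i) * coef I1 u (P j) i)" using le by linarith
      show ?thesis using le p1 p2 by (subst ln_le_cancel_iff) auto
    qed
    then show ?thesis using b i by (simp add: ln_mult)
  qed
  then have "(\<Sum>j<m. Max (\<nu> ` supp I1 uL (P j)) + ln \<beta>) \<le> FF P m u \<nu>"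
    unfolding FF_def by (intro sum_mono) auto
  then show ?thesis by (simp add: sum.distrib)
qed

lemma min_le_zero:
  fixes \<nu> :: "'n::finite \<Rightarrow> real"
  assumes "(\<Sum>i\<in>UNIV. \<nu> i) = 0"
  shows "Min (range \<nu>) \<le> 0"
proof (rule ccontr)
  assume "\<not> ?thesis"
  then have mpos: "Min (range \<nu>) > 0" by (simp only: not_le)
  have "\<nu> i > 0" for i
  proof -
    have "Min (range \<nu>) \<le> \<nu> i" by (rule Min_le) auto
    then show ?thesis using mpos by simp
  qed
  then have "\<forall>i. \<nu> i > 0" by blast
  then have "(\<Sum>i\<in>UNIV. \<nu> i) > 0" by (intro sum_pos) auto
  then show False using assms by simp
qed

lemma coef_tendsto:
  assumes "(f \<longlongrightarrow> v) F"
  shows "((\<lambda>n. coef I1 (\<lambda>i. f n $ i) x i) \<longlongrightarrow> coef I1 (\<lambda>i. v $ i) x i) F"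
proof -
  have h: "((\<lambda>n. f n $ i $ a) \<longlongrightarrow> v $ i $ a) F" for a
    by (rule tendsto_vec_nth[OF tendsto_vec_nth[OF assms]])
  have "((\<lambda>n. (cmod (\<Sum>a\<in>UNIV. cnj (f n $ i $ a) * x $ a))^2) \<longlongrightarrow>
        (cmod (\<Sum>a\<in>UNIV. cnj (v $ i $ a) * x $ a))^2) F"
    by (intro tendsto_power tendsto_norm tendsto_sum tendsto_mult tendsto_cnj h tendsto_const)
  then show ?thesis by (simp add: coef_def sf_id ip_def)
qed


lemma ortho_limit:
  assumes lim: "W \<longlonglongrightarrow> lU" and orth: "\<forall>n. orthoG I1 (\<lambda>i. W n $ i)"
  shows "orthoG I1 (\<lambda>i. lU $ i)"
  unfolding orthoG_def sf_id
proof (intro allI)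
  fix i k
  have h: "((\<lambda>n. W n $ i' $ a) \<longlonglongrightarrow> lU $ i' $ a)" for i' a
    by (rule tendsto_vec_nth[OF tendsto_vec_nth[OF lim]])
  have "(\<lambda>n. ip (W n $ i) (W n $ k)) \<longlonglongrightarrow> ip (lU $ i) (lU $ k)"
    unfolding ip_def by (intro tendsto_sum tendsto_mult tendsto_cnj h)
  moreover have "(\<lambda>n. ip (W n $ i) (W n $ k)) = (\<lambda>n. if i = k then 1 else 0)"
    using orth by (simp add: orthoG_def sf_id)
  ultimately have "(\<lambda>n. if i = k then 1 else 0 :: complex) \<longlonglongrightarrow> ip (lU $ i) (lU $ k)" by simp
  then show "ip (lU $ i) (lU $ k) = (if i = k then 1 else 0)"
    using LIMSEQ_unique tendsto_const by metis
qed

lemma bounded_frames: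
  fixes W :: "nat \<Rightarrow> complex^'n^'n"
  assumes "\<forall>n. orthoG I1 (\<lambda>i. W n $ i)"
  shows "bounded (range W)"
  unfolding bounded_iff
proof (intro exI ballI)
  fix y assume "y \<in> range W"
  then obtain n where y: "y = W n" by blast
  have "norm y \<le> (\<Sum>i\<in>UNIV. norm (y $ i))" by (rule norm_vec_le_sum)
  also have "\<dots> = real CARD('n)" using assms norm_u[of "\<lambda>i. W n $ i"] y by simp
  finally show "norm y \<le> real CARD('n)" .
qed

lemma near_eventually:
  fixes P :: "nat \<Rightarrow> complex^'n"
  assumes lim: "W \<longlonglongrightarrow> lU"
  shows "\<exists>\<beta>>0. eventually (\<lambda>n. \<forall>j<m. \<forall>i\<in>supp I1 (\<lambda>i. lU $ i) (P j).
            coef I1 (\<lambda>i. W n $ i) (P j) i \<ge> \<beta>) sequentially"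
proof -
  define Pairs where "Pairs = {p :: nat \<times> 'n. fst p < m \<and> snd p \<in> supp I1 (\<lambda>i. lU $ i) (P (fst p))}"
  have finP: "finite Pairs"
    by (rule finite_subset[of _ "{..<m} \<times> UNIV"]) (auto simp: Pairs_def)
  define cL where "cL p = coef I1 (\<lambda>i. lU $ i) (P (fst p)) (snd p)" for p
  have cLpos: "cL p > 0" if "p \<in> Pairs" for p
    using that by (auto simp: Pairs_def cL_def supp_def coef_def)
  define \<beta> where "\<beta> = Min (insert 1 ((\<lambda>p. cL p / 2) ` Pairs))"
  have bpos: "\<beta> > 0" unfolding \<beta>_def using finP cLpos by (subst Min_gr_iff) auto
  have ble: "\<beta> \<le> cL p / 2" if "p \<in> Pairs" for p
    unfolding \<beta>_def using finP that by (intro Min_le) auto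
  have ev: "\<forall>p\<in>Pairs. eventually (\<lambda>n. coef I1 (\<lambda>i. W n $ i) (P (fst p)) (snd p) > cL p / 2) sequentially"
  proof
    fix p assume p: "p \<in> Pairs"
    have "(\<lambda>n. coef I1 (\<lambda>i. W n $ i) (P (fst p)) (snd p)) \<longlonglongrightarrow> cL p"
      unfolding cL_def by (rule coef_tendsto[OF lim])
    moreover have "cL p / 2 < cL p" using cLpos[OF p] by simp
    ultimately show "eventually (\<lambda>n. coef I1 (\<lambda>i. W n $ i) (P (fst p)) (snd p) > cL p / 2) sequentially"
      by (rule order_tendstoD(1))
  qed
  have "eventually (\<lambda>n. \<forall>p\<in>Pairs. coef I1 (\<lambda>i. W n $ i) (P (fst p)) (snd p) > cL p / 2) sequentially"
    by (rule eventually_ball_finite[OF finP ev])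
  then have "eventually (\<lambda>n. \<forall>j<m. \<forall>i\<in>supp I1 (\<lambda>i. lU $ i) (P j).
            coef I1 (\<lambda>i. W n $ i) (P j) i \<ge> \<beta>) sequentially"
  proof (rule eventually_mono)
    fix n assume h: "\<forall>p\<in>Pairs. coef I1 (\<lambda>i. W n $ i) (P (fst p)) (snd p) > cL p / 2"
    show "\<forall>j<m. \<forall>i\<in>supp I1 (\<lambda>i. lU $ i) (P j). coef I1 (\<lambda>i. W n $ i) (P j) i \<ge> \<beta>"
    proof (intro allI impI ballI)
      fix j i assume "j < m" "i \<in> supp I1 (\<lambda>i. lU $ i) (P j)"
      then have p: "(j, i) \<in> Pairs" by (simp add: Pairs_def)
      show "coef I1 (\<lambda>i. W n $ i) (P j) i \<ge> \<beta>" using h p ble[OF p] by fastforce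
    qed
  qed
  then show ?thesis using bpos by blast
qed


lemma bounded_nu:
  fixes P :: "nat \<Rightarrow> complex^'n" and U :: "nat \<Rightarrow> complex^'n^'n" and \<nu> :: "nat \<Rightarrow> 'n \<Rightarrow> real"
  assumes nz: "\<forall>j<m. P j \<noteq> 0" and stable: "stable_cluster m P"
    and orth: "\<forall>k. orthoG I1 (\<lambda>i. U k $ i)" and s0: "\<forall>k. (\<Sum>i\<in>UNIV. \<nu> k i) = 0"
    and bound: "\<forall>k. FF P m (\<lambda>i. U k $ i) (\<nu> k) \<le> C"
  shows "\<exists>B. \<forall>k i. \<nu> k i \<le> B"
proof (rule ccontr)
  assume "\<not> ?thesis"
  then have "\<forall>n::nat. \<exists>k i. \<nu> k i > real n" by (metis not_le)
  then obtain s t where st: "\<And>n. \<nu> (s n) (t n) > real n" by metis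
  have bdd: "bounded (range (\<lambda>n. U (s n)))" by (rule bounded_frames) (use orth in auto)
  obtain lU r where r: "strict_mono r" and lim: "((\<lambda>n. U (s n)) \<circ> r) \<longlonglongrightarrow> lU"
    using bounded_imp_convergent_subsequence[OF bdd] by blast
  define W where "W n = U (s (r n))" for n
  have Weq: "W = (\<lambda>n. U (s n)) \<circ> r" by (simp add: W_def fun_eq_iff)
  have limW: "W \<longlonglongrightarrow> lU" using lim by (simp only: Weq)
  have orthW: "\<forall>n. orthoG I1 (\<lambda>i. W n $ i)" using orth by (simp add: W_def)
  define uL where "uL = (\<lambda>i. lU $ i)"
  have uL: "orthoG I1 uL" unfolding uL_def by (rule ortho_limit[OF limW orthW])
  obtain \<beta> where b: "\<beta> > 0" and evn: "eventually (\<lambda>n. \<forall>j<m. \<forall>i\<in>supp I1 uL (P j).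
            coef I1 (\<lambda>i. W n $ i) (P j) i \<ge> \<beta>) sequentially"
    using near_eventually[OF limW, of m P] unfolding uL_def by blast
  obtain N0 where N0: "\<And>n. n \<ge> N0 \<Longrightarrow> \<forall>j<m. \<forall>i\<in>supp I1 uL (P j).
            coef I1 (\<lambda>i. W n $ i) (P j) i \<ge> \<beta>"
    using evn by (auto simp: eventually_sequentially)
  define \<delta> where "\<delta> = delta I1 uL P m"
  have dpos: "\<delta> > 0" unfolding \<delta>_def by (rule delta_pos(1)[OF pdh_id uL stable])
  have key: "C \<ge> \<delta> * real n + real m * ln \<beta>" if n: "n \<ge> N0" for n
  proof -
    define \<mu> where "\<mu> = \<nu> (s (r n))"
    have s0n: "(\<Sum>i\<in>UNIV. \<mu> i) = 0" using s0 by (simp add: \<mu>_def)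
    have "FF P m (\<lambda>i. W n $ i) \<mu> \<ge> (\<Sum>j<m. Max (\<mu> ` supp I1 uL (P j))) + real m * ln \<beta>"
      by (rule lower_near[OF uL nz b N0[OF n]])
    moreover have "(\<Sum>j<m. Max (\<mu> ` supp I1 uL (P j))) = psi I1 uL P m \<mu>"
      by (simp add: psi_def s0n)
    moreover have "psi I1 uL P m \<mu> \<ge> \<delta> * (Max (range \<mu>) - Min (range \<mu>))"
      unfolding \<delta>_def by (rule psi_bound[OF pdh_id uL stable nz])
    moreover have "Max (range \<mu>) - Min (range \<mu>) \<ge> real n"
    proof -
      have "\<mu> (t (r n)) \<le> Max (range \<mu>)" by (rule Max_ge) auto
      moreover have "\<mu> (t (r n)) > real (r n)" using st by (simp add: \<mu>_def)
      moreover have "r n \<ge> n" using r by (rule seq_suble)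
      moreover have "Min (range \<mu>) \<le> 0" by (rule min_le_zero[OF s0n])
      ultimately show ?thesis by linarith
    qed
    then have "\<delta> * (Max (range \<mu>) - Min (range \<mu>)) \<ge> \<delta> * real n"
      using dpos by (intro mult_left_mono) auto
    moreover have "FF P m (\<lambda>i. W n $ i) \<mu> \<le> C" using bound by (simp add: W_def \<mu>_def)
    ultimately show ?thesis by linarith
  qed
  define n where "n = max N0 (nat \<lceil>(C - real m * ln \<beta>) / \<delta>\<rceil> + 1)"
  have "n \<ge> N0" by (simp add: n_def)
  have "real n > (C - real m * ln \<beta>) / \<delta>"
  proof -
    have "real n \<ge> real (nat \<lceil>(C - real m * ln \<beta>) / \<delta>\<rceil>) + 1" by (simp add: n_def)
    moreover have "real (nat \<lceil>(C - real m * ln \<beta>) / \<delta>\<rceil>) \<ge> (C - real m * ln \<beta>) / \<delta>"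
      by linarith
    ultimately show ?thesis by linarith
  qed
  then have "\<delta> * real n > C - real m * ln \<beta>" using dpos by (simp add: pos_divide_less_eq mult.commute)
  then show False using key[OF \<open>n \<ge> N0\<close>] by linarith
qed


lemma seq_limit:
  fixes P :: "nat \<Rightarrow> complex^'n" and Q :: "nat \<Rightarrow> complex^'n^'n"
  assumes nz: "\<forall>j<m. P j \<noteq> 0" and stable: "stable_cluster m P"
    and QH: "\<forall>k. Q k \<in> HH" and bd: "\<forall>k. DD m P (Q k) \<le> C"
  shows "\<exists>Qs\<in>HH. \<exists>r. strict_mono r \<and> (\<lambda>n. DD m P (Q (r n))) \<longlonglongrightarrow> DD m P Qs"
proof -
  have "\<forall>k. \<exists>u \<mu>. orthoG I1 u \<and> (\<forall>i. \<mu> i > 0) \<and> (\<Prod>i\<in>UNIV. \<mu> i) = 1 \<and>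
     Q k = mk (\<lambda>i. I1 *v u i) \<mu>"
    using HH_decomp[OF pdh_id det_id] QH by blast
  then obtain uu \<mu>\<mu> where dec: "\<And>k. orthoG I1 (uu k)" "\<And>k i. \<mu>\<mu> k i > 0"
      "\<And>k. (\<Prod>i\<in>UNIV. \<mu>\<mu> k i) = 1" "\<And>k. Q k = mk (\<lambda>i. I1 *v uu k i) (\<mu>\<mu> k)"
    by metis
  define \<nu> where "\<nu> k i = ln (\<mu>\<mu> k i)" for k i
  have s0: "(\<Sum>i\<in>UNIV. \<nu> k i) = 0" for k
  proof -
    have nz': "\<mu>\<mu> k i \<noteq> 0" for i using dec(2)[of k i] by simp
    have "ln (\<Prod>i\<in>UNIV. \<mu>\<mu> k i) = (\<Sum>i\<in>UNIV. ln (\<mu>\<mu> k i))"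
      by (rule ln_prod) (simp_all add: nz')
    then show ?thesis using dec(3)[of k] by (simp add: \<nu>_def)
  qed
  have Qk: "Q k = mk (uu k) (\<lambda>i. exp (\<nu> k i))" for k
  proof -
    have "(\<lambda>i. exp (\<nu> k i)) = \<mu>\<mu> k" using dec(2) by (simp add: \<nu>_def fun_eq_iff)
    then show ?thesis using dec(4)[of k] by simp
  qed
  define U where "U k = (\<chi> i. uu k i)" for k
  have Uu: "(\<lambda>i. U k $ i) = uu k" for k by (simp add: U_def)
  have orthU: "\<forall>k. orthoG I1 (\<lambda>i. U k $ i)" using dec(1) by (simp add: Uu)
  have DQ: "DD m P (Q k) = FF P m (\<lambda>i. U k $ i) (\<nu> k)" for k
    using DD_FF(1)[OF dec(1) s0] by (simp add: Qk Uu)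
  obtain B where B: "\<And>k i. \<nu> k i \<le> B"
    using bounded_nu[OF nz stable orthU, of \<nu> C] s0 bd DQ by auto
  define M where "M = real CARD('n) * \<bar>B\<bar> + \<bar>B\<bar>"
  have absnu: "\<bar>\<nu> k i\<bar> \<le> M" for k i
  proof -
    have "(\<Sum>l\<in>UNIV. \<nu> k l) = \<nu> k i + (\<Sum>l\<in>UNIV - {i}. \<nu> k l)"
      by (simp add: sum.remove)
    then have e: "\<nu> k i = - (\<Sum>l\<in>UNIV - {i}. \<nu> k l)" using s0[of k] by simp
    have "(\<Sum>l\<in>UNIV - {i}. \<nu> k l) \<le> (\<Sum>l\<in>UNIV - {i}. \<bar>B\<bar>)"
    proof (rule sum_mono)
      fix l show "\<nu> k l \<le> \<bar>B\<bar>" using B[of k l] abs_ge_self[of B] by linarith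
    qed
    also have "\<dots> \<le> (\<Sum>l\<in>(UNIV::'n set). \<bar>B\<bar>)" by (rule sum_mono2) auto
    finally have "(\<Sum>l\<in>UNIV - {i}. \<nu> k l) \<le> real CARD('n) * \<bar>B\<bar>" by simp
    then have "\<nu> k i \<ge> - (real CARD('n) * \<bar>B\<bar>)" using e by linarith
    moreover have "\<nu> k i \<le> \<bar>B\<bar>" using B[of k i] by linarith
    moreover have "real CARD('n) * \<bar>B\<bar> \<ge> 0" by simp
    ultimately show ?thesis unfolding M_def abs_le_iff using abs_ge_zero[of B] by linarith
  qed
  obtain lU r1 where r1: "strict_mono r1" and lim1: "(U \<circ> r1) \<longlonglongrightarrow> lU"
    using bounded_imp_convergent_subsequence[OF bounded_frames[OF orthU]] by blast
  define V where "V k = (\<chi> i. \<nu> k i)" for k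
  have bddV: "bounded (range (V \<circ> r1))"
    unfolding bounded_iff
  proof (intro exI ballI)
    fix y assume "y \<in> range (V \<circ> r1)"
    then obtain n where y: "y = V (r1 n)" by auto
    have "norm y \<le> (\<Sum>i\<in>UNIV. norm (y $ i))" by (rule norm_vec_le_sum)
    also have "\<dots> \<le> (\<Sum>i\<in>(UNIV::'n set). M)"
      by (intro sum_mono) (simp add: y V_def absnu)
    finally show "norm y \<le> real CARD('n) * M" by simp
  qed
  obtain lV r2 where r2: "strict_mono r2" and lim2: "((V \<circ> r1) \<circ> r2) \<longlonglongrightarrow> lV"
    using bounded_imp_convergent_subsequence[OF bddV] by blast
  define r where "r = r1 \<circ> r2"
  have r: "strict_mono r" unfolding r_def using r1 r2 by (rule strict_mono_o)
  have limU: "(\<lambda>n. U (r n)) \<longlonglongrightarrow> lU"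
    using LIMSEQ_subseq_LIMSEQ[OF lim1 r2] by (simp add: r_def comp_def)
  have limV: "(\<lambda>n. V (r n)) \<longlonglongrightarrow> lV"
    using lim2 by (simp add: r_def comp_def)
  define uL where "uL = (\<lambda>i. lU $ i)"
  define \<nu>L where "\<nu>L = (\<lambda>i. lV $ i)"
  have uL: "orthoG I1 uL" unfolding uL_def
    by (rule ortho_limit[OF limU]) (use orthU in auto)
  have s0L: "(\<Sum>i\<in>UNIV. \<nu>L i) = 0"
  proof -
    have "(\<lambda>n. \<Sum>i\<in>UNIV. V (r n) $ i) \<longlonglongrightarrow> (\<Sum>i\<in>UNIV. lV $ i)"
      by (intro tendsto_sum tendsto_vec_nth limV)
    moreover have "(\<lambda>n. \<Sum>i\<in>UNIV. V (r n) $ i) = (\<lambda>n. 0)" using s0 by (simp add: V_def)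
    ultimately have "(\<lambda>n. 0::real) \<longlonglongrightarrow> (\<Sum>i\<in>UNIV. lV $ i)" by simp
    then show ?thesis using LIMSEQ_unique tendsto_const unfolding \<nu>L_def by metis
  qed
  define Qs where "Qs = mk uL (\<lambda>i. exp (\<nu>L i))"
  have QsH: "Qs \<in> HH" unfolding Qs_def by (rule DD_FF(2)[OF uL s0L])
  have DQs: "DD m P Qs = FF P m uL \<nu>L" unfolding Qs_def by (rule DD_FF(1)[OF uL s0L])
  have "(\<lambda>n. FF P m (\<lambda>i. U (r n) $ i) (\<nu> (r n))) \<longlonglongrightarrow> FF P m uL \<nu>L"
    unfolding FF_def
  proof (rule tendsto_sum, rule tendsto_ln)
    fix j assume j: "j \<in> {..<m}"
    have ci: "(\<lambda>n. coef I1 (\<lambda>i. U (r n) $ i) (P j) i) \<longlonglongrightarrow> coef I1 uL (P j) i" for i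
      unfolding uL_def by (rule coef_tendsto[OF limU])
    have ni: "(\<lambda>n. \<nu> (r n) i) \<longlonglongrightarrow> \<nu>L i" for i
      using tendsto_vec_nth[OF limV, of i] by (simp add: V_def \<nu>L_def)
    show "(\<lambda>n. \<Sum>i\<in>UNIV. exp (\<nu> (r n) i) * coef I1 (\<lambda>i. U (r n) $ i) (P j) i) \<longlonglongrightarrow>
          (\<Sum>i\<in>UNIV. exp (\<nu>L i) * coef I1 uL (P j) i)"
      by (intro tendsto_sum tendsto_mult tendsto_exp ci ni)
    show "(\<Sum>i\<in>UNIV. exp (\<nu>L i) * coef I1 uL (P j) i) \<noteq> 0"
      using wsum_pos[OF pdh_id uL, of "P j" "\<lambda>i. exp (\<nu>L i)"] nz j by simp
  qed
  then have "(\<lambda>n. DD m P (Q (r n))) \<longlonglongrightarrow> DD m P Qs" by (simp add: DQ DQs)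
  then show ?thesis using QsH r by blast
qed

lemma exists_min:
  fixes P :: "nat \<Rightarrow> complex^'n"
  assumes nz: "\<forall>j<m. P j \<noteq> 0" and stable: "stable_cluster m P"
  shows "\<exists>Q0\<in>HH. \<forall>Q\<in>HH. DD m P Q0 \<le> DD m P Q"
proof (cases "bdd_below (DD m P ` HH)")
  case True
  define L where "L = Inf (DD m P ` HH)"
  have ne: "DD m P ` HH \<noteq> {}" using id_HH by blast
  have "\<forall>k::nat. \<exists>Q\<in>HH. DD m P Q < L + inverse (real (Suc k))"
  proof
    fix k :: nat
    have "Inf (DD m P ` HH) < L + inverse (real (Suc k))" by (simp add: L_def)
    then show "\<exists>Q\<in>HH. DD m P Q < L + inverse (real (Suc k))"
      using cInf_less_iff[OF ne True] by auto
  qed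
  then obtain Q where QH: "\<And>k. Q k \<in> HH" and Ql: "\<And>k. DD m P (Q k) < L + inverse (real (Suc k))"
    by metis
  have bd: "\<forall>k. DD m P (Q k) \<le> L + 1"
  proof
    fix k have "inverse (real (Suc k)) \<le> 1" by (auto simp: inverse_le_1_iff)
    then show "DD m P (Q k) \<le> L + 1" using Ql[of k] by linarith
  qed
  obtain Qs r where Qs: "Qs \<in> HH" and r: "strict_mono r"
    and lim: "(\<lambda>n. DD m P (Q (r n))) \<longlonglongrightarrow> DD m P Qs"
    using seq_limit[OF nz stable _ bd] QH by blast
  have inv0: "(\<lambda>n. inverse (real (Suc (r n)))) \<longlonglongrightarrow> 0"
    using LIMSEQ_subseq_LIMSEQ[OF LIMSEQ_inverse_real_of_nat r] by (simp add: comp_def)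
  have "(\<lambda>n. L + inverse (real (Suc (r n)))) \<longlonglongrightarrow> L + 0"
    by (intro tendsto_add tendsto_const inv0)
  then have "DD m P Qs \<le> L + 0"
    by (rule LIMSEQ_le[OF lim]) (use Ql less_imp_le in blast)
  then have "\<forall>Q'\<in>HH. DD m P Qs \<le> DD m P Q'"
    using cInf_lower[OF _ True] by (fastforce simp: L_def)
  then show ?thesis using Qs by blast
next
  case False
  have "\<forall>k::nat. \<exists>Q\<in>HH. DD m P Q < - real k"
  proof (rule ccontr)
    assume "\<not> ?thesis"
    then obtain k :: nat where "\<forall>Q\<in>HH. DD m P Q \<ge> - real k" by (auto simp: not_less)
    then have "bdd_below (DD m P ` HH)" by (intro bdd_belowI[of _ "- real k"]) auto
    then show False using False by simp
  qed
  then obtain Q where QH: "\<And>k. Q k \<in> HH" and Ql: "\<And>k. DD m P (Q k) < - real k" by metis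
  have bd: "\<forall>k. DD m P (Q k) \<le> 0"
  proof
    fix k show "DD m P (Q k) \<le> 0" using Ql[of k] of_nat_0_le_iff[of k] by linarith
  qed
  obtain Qs r where Qs: "Qs \<in> HH" and r: "strict_mono r"
    and lim: "(\<lambda>n. DD m P (Q (r n))) \<longlonglongrightarrow> DD m P Qs"
    using seq_limit[OF nz stable _ bd] QH by blast
  have "eventually (\<lambda>n. DD m P (Q (r n)) > DD m P Qs - 1) sequentially"
    by (rule order_tendstoD(1)[OF lim]) simp
  then obtain N0 where N0: "\<And>n. n \<ge> N0 \<Longrightarrow> DD m P (Q (r n)) > DD m P Qs - 1"
    by (auto simp: eventually_sequentially)
  define n where "n = max N0 (nat \<lceil>1 - DD m P Qs\<rceil>)"
  have "DD m P (Q (r n)) > DD m P Qs - 1" using N0 by (simp add: n_def)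
  moreover have "DD m P (Q (r n)) < - real (r n)" by (rule Ql)
  moreover have "real (r n) \<ge> real n" using seq_suble[OF r, of n] by simp
  moreover have "real n \<ge> 1 - DD m P Qs" by (simp add: n_def) linarith
  ultimately show ?thesis by linarith
qed


lemma DD_scale:
  assumes Q: "Q \<in> HH" and nz: "\<forall>j<m. P j \<noteq> 0" and c: "\<forall>j<m. c j \<noteq> 0"
  shows "DD m (\<lambda>j. c j *s P j) Q = DD m P Q + (\<Sum>j<m. ln ((cmod (c j))^2))"
proof -
  have "ln (Re (herm_form (c j *s P j) Q)) = ln (Re (herm_form (P j) Q)) + ln ((cmod (c j))^2)"
    if j: "j < m" for j
  proof -
    have h: "herm_form (c j *s P j) Q = of_real ((cmod (c j))^2) * herm_form (P j) Q"
      by (simp add: herm_form_sf sf_scale_self cnj_mult_self)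
    have p1: "Re (herm_form (P j) Q) > 0" using HH_herm_pos[OF Q] nz j by simp
    have p2: "(cmod (c j))^2 > 0" using c j by simp
    show ?thesis using p1 p2 by (simp add: h ln_mult)
  qed
  then show ?thesis using Q by (simp add: DD_HH sum.distrib)
qed

lemma crit_scale:
  assumes cr: "critical_on_HH m P Q" and nz: "\<forall>j<m. P j \<noteq> 0" and c: "\<forall>j<m. c j \<noteq> 0"
  shows "critical_on_HH m (\<lambda>j. c j *s P j) Q"
  unfolding critical_on_HH_def
proof (intro conjI allI impI)
  show "Q \<in> HH" using cr by (simp add: critical_on_HH_def)
  fix \<gamma> :: "real \<Rightarrow> complex^'a^'a"
  assume h: "(\<forall>t. \<gamma> t \<in> HH) \<and> \<gamma> 0 = Q \<and> \<gamma> differentiable at 0"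
  have d: "((\<lambda>t. DD m P (\<gamma> t)) has_real_derivative 0) (at 0)"
    using cr h unfolding critical_on_HH_def by blast
  have f: "(\<lambda>t. DD m (\<lambda>j. c j *s P j) (\<gamma> t)) = (\<lambda>t. DD m P (\<gamma> t) + (\<Sum>j<m. ln ((cmod (c j))^2)))"
    using h DD_scale[OF _ nz c] by auto
  show "((\<lambda>t. DD m (\<lambda>j. c j *s P j) (\<gamma> t)) has_real_derivative 0) (at 0)"
    unfolding f using DERIV_add[OF d DERIV_const] by simp
qed

theorem mainTheorem3:
  fixes m :: nat and P :: "nat \<Rightarrow> complex^'n"
  assumes nonzero: "\<And>j. j < m \<Longrightarrow> P j \<noteq> 0"
    and stable: "stable_cluster m P"
  shows "(\<exists>!Q. critical_on_HH m P Q) \<and>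
    (\<forall>Q. critical_on_HH m P Q \<longrightarrow>
       (\<forall>Q'\<in>HH. DD m P Q \<le> DD m P Q') \<and>
       (\<exists>\<theta>>0. DD m P Q = ln \<theta>) \<and>
       (\<forall>c :: nat \<Rightarrow> complex. (\<forall>j<m. c j \<noteq> 0) \<longrightarrow>
          critical_on_HH m (\<lambda>j. c j *s P j) Q))"
proof -
  have nz: "\<forall>j<m. P j \<noteq> 0" using nonzero by blast
  obtain Q0 where Q0: "Q0 \<in> HH" and min: "\<forall>Q\<in>HH. DD m P Q0 \<le> DD m P Q"
    using exists_min[OF nz stable] by blast
  have c0: "critical_on_HH m P Q0" by (rule min_critical[OF Q0 min nz])
  have uq: "\<And>Q. critical_on_HH m P Q \<Longrightarrow> Q = Q0"
    using crit_unique[OF nz stable] c0 by blast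
  show ?thesis
  proof (intro conjI allI impI)
    show "\<exists>!Q. critical_on_HH m P Q" using c0 uq by blast
  next
    fix Q assume "critical_on_HH m P Q"
    then have QQ: "Q = Q0" by (rule uq)
    show "\<forall>Q'\<in>HH. DD m P Q \<le> DD m P Q'" using min QQ by simp
    show "\<exists>\<theta>>0. DD m P Q = ln \<theta>" by (intro exI[of _ "exp (DD m P Q)"]) simp
    fix c :: "nat \<Rightarrow> complex" assume "\<forall>j<m. c j \<noteq> 0"
    then show "critical_on_HH m (\<lambda>j. c j *s P j) Q" using crit_scale[OF _ nz] c0 QQ by simp
  qed
qed


end
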